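(* Consider the setting and algorithm described in the context. Let $\gamma>0$ and $K_0\ge0$ be such that for all $k\ge K_0$: $\gamma_k=\gamma$, $\delta_k=\delta:=2\nu+L_{\nabla h}+\frac{2\|A\|^2}{\gamma}$ and $\|z^{k+1}\|\le\min\left(\frac{\varepsilon}{\gamma},\sqrt{\frac{2\varepsilon}{\gamma}}\right)$. Let $0<m\le M$ be constants with $m<f(Kx^k)\le M$ for all $k\ge1$, and let $K_1\ge K_0+1$ be such that $m\le\langle Kx^k,y^k\rangle-f^*(y^k)\le f(Kx^k)\le M$ for all $k\ge K_1$. Let $\Gamma(x,y,z,u):=\frac{\Psi(x,z,u,\delta,\gamma)}{\langle Kx,y\rangle-f^*(y)}$ on $\{(x,y)\in\mathbb{R}^n\times\operatorname{dom}f^*:\langle Kx,y\rangle-f^*(y)>m/2\}\times\operatorname{dom}g^*\times\mathbb{R}^n$. Suppose that $f^*$ is calm at every point of its effective domain and that $g$ is essentially strictly convex. Then there exists $\zeta>0$ such that for all $k\ge K_1$, $\operatorname{dist}\big(0,\partial\Gamma(x^{k+1},y^{k+1},z^{k+1},u^{k+1})\big)\le\zeta\big(\|x^k-x^{k+1}\|+\|u^k-u^{k+1}\|+\|z^k-z^{k+1}\|\big)$, where $\partial$ denotes the limiting subdifferential.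
   Context: Setting: $\mathcal{S}\subseteq\mathbb{R}^n$ nonempty, convex, compact; $A:\mathbb{R}^n\to\mathbb{R}^s$, $K:\mathbb{R}^n\to\mathbb{R}^p$ linear with adjoints $A^*,K^*$ and operator norm $\|A\|$; $g:\mathbb{R}^s\to\mathbb{R}\cup\{+\infty\}$ proper, convex, lsc; $h:\mathbb{R}^n\to\mathbb{R}$ differentiable on an open set containing $\mathcal{S}$ with $L_{\nabla h}$-Lipschitz gradient there; $f:\mathbb{R}^p\to\mathbb{R}\cup\{+\infty\}$ proper, convex, lsc with $K(\mathcal{S})\subseteq\operatorname{int}(\operatorname{dom}f)$ and $f(Kx)>0$ on $\mathcal{S}$; $\mathcal{S}\cap A^{-1}(\operatorname{dom}g)\ne\emptyset$, $\inf_{x\in\mathcal{S}}\{g(Ax)+h(x)\}>0$; $A(\mathcal{S})\subseteq\operatorname{dom}(\partial g)$ and there is $\ell>0$ with $\operatorname{dist}(0,\partial g(Ax))\le\ell$ for all $x\in\mathcal{S}$. Notation: $f^*,g^*$ Fenchel conjugates; $\iota_{\mathcal{S}}$ indicator; $\operatorname{Proj}_{\mathcal{S}}$ projection; $\operatorname{prox}_{\varphi,\kappa}(x)=\arg\min_y\{\varphi(y)+\frac1{2\kappa}\|y-x\|^2\}$; $\Psi(x,z,u,\delta,\gamma):=\langle z,Ax\rangle-g^*(z)+h(x)+\iota_{\mathcal{S}}(x)+\frac{\delta}{2}\|x-u\|^2-\frac{\gamma}{2}\|z\|^2$. A function $\varphi$ is calm at $\hat y\in\operatorname{dom}\varphi$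 if there are $\epsilon,\kappa>0$ with $|\varphi(y)-\varphi(\hat y)|\le\kappa\|y-\hat y\|$ whenever $\|y-\hat y\|<\epsilon$. A proper function is essentially strictly convex if it is strictly convex on every convex subset of $\operatorname{dom}(\partial g)$. Algorithm: given $0<\beta<2$, $\nu>0$, $0<q<1$, $\delta_0,\theta_0>0$, $\gamma_0=1$, $\varepsilon>0$ and $(x^0,z^0,u^0)$, for $k\ge0$: choose $y^{k+1}\in\partial f(Kx^k)$; $x^{k+1}:=\operatorname{Proj}_{\mathcal{S}}(u^k+\frac{\theta_k}{\delta_k}K^*y^{k+1}-\frac1{\delta_k}\nabla h(x^k)-\frac1{\delta_k}A^*z^k)$; $u^{k+1}:=(1-\beta)u^k+\beta x^{k+1}$; take the smallest $j_k\ge0$ such that with $\gamma_{k,j_k}:=\gamma_kq^{j_k}$, $z^{k+1,j_k}:=\operatorname{prox}_{g^*,1/\gamma_{k,j_k}}(Ax^{k+1}/\gamma_{k,j_k})$ one has $\theta_{k+1}:=\Psi(x^{k+1},z^{k+1,j_k},u^{k+1},\delta_k,\gamma_{k,j_k})/f(Kx^{k+1})>0$; set $\gamma_{k+1}:=\gamma_{k,j_k}$, $\delta_{k+1}:=2\nu+L_{\nabla h}+2\|A\|^2/\gamma_{k+1}$, $z^{k+1}:=z^{k+1,j_k}$; if $\|z^{k+1}\|>\min(\varepsilon/\gamma_{k+1},\sqrt{2\varepsilon/\gamma_{k+1}})$, replace $\gamma_{k+1}$ by $\gamma_{k+1}q$ and recompute $\delta_{k+1}$ by the same formula. *)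

theory Defs
  imports "HOL-Analysis.Analysis" "HOL-Library.Extended_Real"
begin

definition edom :: "('a \<Rightarrow> ereal) \<Rightarrow> 'a set" where
  "edom \<phi> = {x. \<phi> x < \<infinity>}"

definition proper_fun :: "('a \<Rightarrow> ereal) \<Rightarrow> bool" where
  "proper_fun \<phi> \<longleftrightarrow> (\<exists>x. \<phi> x < \<infinity>) \<and> (\<forall>x. \<phi> x > -\<infinity>)"

definition convex_fun :: "('a::real_vector \<Rightarrow> ereal) \<Rightarrow> bool" where
  "convex_fun \<phi> \<longleftrightarrow> (\<forall>x y t. 0 \<le> t \<and> t \<le> 1 \<longrightarrow>
      \<phi> (t *\<^sub>R x + (1 - t) *\<^sub>R y) \<le> ereal t * \<phi> x + ereal (1 - t) * \<phi> y)"

definition lsc_fun :: "('a::topological_space \<Rightarrow> ereal) \<Rightarrow> bool" where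
  "lsc_fun \<phi> \<longleftrightarrow> (\<forall>x. \<phi> x \<le> Liminf (at x) \<phi>)"

definition fconj :: "('a::real_inner \<Rightarrow> ereal) \<Rightarrow> 'a \<Rightarrow> ereal" where
  "fconj \<phi> y = (SUP x. ereal (inner x y) - \<phi> x)"

definition csubdiff :: "('a::real_inner \<Rightarrow> ereal) \<Rightarrow> 'a \<Rightarrow> 'a set" where
  "csubdiff \<phi> x = (if \<bar>\<phi> x\<bar> \<noteq> \<infinity> then {v. \<forall>w. \<phi> w \<ge> \<phi> x + ereal (inner v (w - x))} else {})"

definition fsubdiff :: "('a::real_inner \<Rightarrow> ereal) \<Rightarrow> 'a \<Rightarrow> 'a set" where
  "fsubdiff \<phi> x = (if \<bar>\<phi> x\<bar> \<noteq> \<infinity> then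
     {v. \<forall>e>0. \<exists>d>0. \<forall>w. norm (w - x) < d \<longrightarrow>
          \<phi> w \<ge> \<phi> x + ereal (inner v (w - x) - e * norm (w - x))} else {})"

definition lsubdiff :: "('a::real_inner \<Rightarrow> ereal) \<Rightarrow> 'a \<Rightarrow> 'a set" where
  "lsubdiff \<phi> x = (if \<bar>\<phi> x\<bar> \<noteq> \<infinity> then
     {v. \<exists>ws vs. ws \<longlonglongrightarrow> x \<and> (\<lambda>k. \<phi> (ws k)) \<longlonglongrightarrow> \<phi> x \<and>
          (\<forall>k. vs k \<in> fsubdiff \<phi> (ws k)) \<and> vs \<longlonglongrightarrow> v} else {})"

definition dist0 :: "'a::real_normed_vector set \<Rightarrow> ereal" where
  "dist0 C = (if C = {} then \<infinity> else ereal (infdist 0 C))"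

definition calm_at :: "('a::real_normed_vector \<Rightarrow> ereal) \<Rightarrow> 'a \<Rightarrow> bool" where
  "calm_at \<phi> y0 \<longleftrightarrow> (\<exists>e>0. \<exists>\<kappa>>0. \<forall>y. norm (y - y0) < e \<longrightarrow>
      \<bar>\<phi> y - \<phi> y0\<bar> \<le> ereal (\<kappa> * norm (y - y0)))"

definition ess_strictly_convex :: "('a::real_inner \<Rightarrow> ereal) \<Rightarrow> bool" where
  "ess_strictly_convex \<phi> \<longleftrightarrow> (\<forall>C. convex C \<and> C \<subseteq> {x. csubdiff \<phi> x \<noteq> {}} \<longrightarrow>
      (\<forall>x\<in>C. \<forall>y\<in>C. \<forall>t. x \<noteq> y \<and> 0 < t \<and> t < 1 \<longrightarrow>
         \<phi> (t *\<^sub>R x + (1 - t) *\<^sub>R y) < ereal t * \<phi> x + ereal (1 - t) * \<phi> y))"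

definition prox :: "('a::real_normed_vector \<Rightarrow> ereal) \<Rightarrow> real \<Rightarrow> 'a \<Rightarrow> 'a" where
  "prox \<phi> \<kappa> x = (THE y. \<forall>w. \<phi> y + ereal ((norm (y - x))\<^sup>2 / (2 * \<kappa>))
                           \<le> \<phi> w + ereal ((norm (w - x))\<^sup>2 / (2 * \<kappa>)))"

definition Psi :: "'n::real_inner set \<Rightarrow> ('n \<Rightarrow> 's::real_inner) \<Rightarrow> ('s \<Rightarrow> ereal) \<Rightarrow> ('n \<Rightarrow> real)
     \<Rightarrow> 'n \<Rightarrow> 's \<Rightarrow> 'n \<Rightarrow> real \<Rightarrow> real \<Rightarrow> ereal" where
  "Psi S A g h x z u \<delta> \<gamma> =
     (if x \<in> S then ereal (inner z (A x) + h x + \<delta> / 2 * (norm (x - u))\<^sup>2 - \<gamma> / 2 * (norm z)\<^sup>2) - fconj g z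
      else \<infinity>)"

definition Gamma :: "'n::real_inner set \<Rightarrow> ('n \<Rightarrow> 's::real_inner) \<Rightarrow> ('n \<Rightarrow> 'p::real_inner)
     \<Rightarrow> ('s \<Rightarrow> ereal) \<Rightarrow> ('p \<Rightarrow> ereal) \<Rightarrow> ('n \<Rightarrow> real) \<Rightarrow> real \<Rightarrow> real \<Rightarrow> real
     \<Rightarrow> 'n \<times> 'p \<times> 's \<times> 'n \<Rightarrow> ereal" where
  "Gamma S A K g f h \<delta> \<gamma> m = (\<lambda>(x, y, z, u).
     if y \<in> edom (fconj f) \<and> ereal (inner (K x) y) - fconj f y > ereal (m / 2) \<and> z \<in> edom (fconj g)
     then Psi S A g h x z u \<delta> \<gamma> / (ereal (inner (K x) y) - fconj f y)
     else \<infinity>)"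

end

theory Submission
  imports Defs
begin
lemma fconj_ge: "ereal (inner w y) - \<phi> w \<le> fconj \<phi> y"
  unfolding fconj_def by (rule SUP_upper) simp

lemma fconj_le: "(\<And>w. ereal (inner w y) - \<phi> w \<le> B) \<Longrightarrow> fconj \<phi> y \<le> B"
  unfolding fconj_def by (rule SUP_least) simp

lemma lsc_seq:
  fixes \<phi> :: "'a::metric_space \<Rightarrow> ereal"
  assumes lsc: "lsc_fun \<phi>" and p: "ps \<longlonglongrightarrow> p" and le: "\<And>n. \<phi> (ps n) \<le> ereal (a n)"
    and a: "a \<longlonglongrightarrow> a0"
  shows "\<phi> p \<le> ereal a0"
proof (rule ccontr)
  assume "\<not> ?thesis"
  hence lt: "ereal a0 < \<phi> p" by simp
  obtain a1 where a1: "a0 < a1" "ereal a1 < \<phi> p"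
  proof (cases "\<phi> p")
    case (real r) thus ?thesis using lt that[of "(a0 + r)/2"] by auto
  next
    case PInf thus ?thesis using that[of "a0+1"] by auto
  next
    case MInf thus ?thesis using lt by auto
  qed
  have "ereal a1 < Liminf (at p) \<phi>" using a1 lsc unfolding lsc_fun_def
    by (meson order_less_le_trans)
  then obtain e where e: "e > 0" "ereal a1 < (INF y\<in>(ball p e - {p}). \<phi> y)"
    unfolding Liminf_at less_SUP_iff by auto
  have "eventually (\<lambda>n. dist (ps n) p < e) sequentially"
    using p e(1) by (simp add: tendsto_iff)
  moreover have "eventually (\<lambda>n. a n < a1) sequentially"
    using a a1(1) by (simp add: order_tendstoD(2))
  ultimately have "eventually (\<lambda>n. dist (ps n) p < e \<and> a n < a1) sequentially"
    by (rule eventually_conj)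
  then obtain N where "\<forall>n\<ge>N. dist (ps n) p < e \<and> a n < a1" unfolding eventually_sequentially by blast
  then obtain n where n: "dist (ps n) p < e" "a n < a1" by blast
  show False
  proof (cases "ps n = p")
    case True
    have "\<phi> p \<le> ereal (a n)" using le[of n] True by simp
    also have "\<dots> < ereal a1" using n by simp
    finally show False using a1(2) by simp
  next
    case False
    hence "ps n \<in> ball p e - {p}" using n by (simp add: dist_commute)
    hence "(INF y\<in>(ball p e - {p}). \<phi> y) \<le> \<phi> (ps n)" by (rule INF_lower)
    also have "\<dots> \<le> ereal (a n)" by (rule le)
    also have "\<dots> < ereal a1" using n by simp
    finally show False using e(2) by simp
  qed
qed

definition epi :: "('a \<Rightarrow> ereal) \<Rightarrow> ('a \<times> real) set" where
  "epi \<phi> = {(w, t). \<phi> w \<le> ereal t}"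

lemma epi_closed:
  fixes \<phi> :: "'a::real_normed_vector \<Rightarrow> ereal"
  assumes "lsc_fun \<phi>" shows "closed (epi \<phi>)"
proof (rule closed_sequential_limits[THEN iffD2], intro allI impI, elim conjE)
  fix s :: "nat \<Rightarrow> 'a \<times> real" and l
  assume s: "\<forall>n. s n \<in> epi \<phi>" "s \<longlonglongrightarrow> l"
  have "\<phi> (fst l) \<le> ereal (snd l)"
  proof (rule lsc_seq[OF assms])
    show "(\<lambda>n. fst (s n)) \<longlonglongrightarrow> fst l" using s(2) by (intro tendsto_fst)
    show "(\<lambda>n. snd (s n)) \<longlonglongrightarrow> snd l" using s(2) by (intro tendsto_snd)
    show "\<phi> (fst (s n)) \<le> ereal (snd (s n))" for n using s(1) by (auto simp: epi_def split: prod.splits)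
  qed
  thus "l \<in> epi \<phi>" by (auto simp: epi_def split: prod.splits)
qed

lemma epi_convex:
  fixes \<phi> :: "'a::real_vector \<Rightarrow> ereal"
  assumes "convex_fun \<phi>" shows "convex (epi \<phi>)"
proof (rule convexI)
  fix p q :: "'a \<times> real" and u v :: real
  assume p: "p \<in> epi \<phi>" and q: "q \<in> epi \<phi>" and uv: "0 \<le> u" "0 \<le> v" "u + v = 1"
  obtain w1 t1 w2 t2 where pq: "p = (w1,t1)" "q = (w2,t2)" by fastforce
  have 1: "\<phi> w1 \<le> ereal t1" "\<phi> w2 \<le> ereal t2" using p q pq by (auto simp: epi_def)
  have v: "v = 1 - u" using uv by simp
  have "\<phi> (u *\<^sub>R w1 + v *\<^sub>R w2) \<le> ereal u * \<phi> w1 + ereal v * \<phi> w2"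
    using assms uv unfolding convex_fun_def v by auto
  also have "\<dots> \<le> ereal u * ereal t1 + ereal v * ereal t2"
    by (intro add_mono ereal_mult_left_mono 1) (use uv in auto)
  finally show "u *\<^sub>R p + v *\<^sub>R q \<in> epi \<phi>" using pq by (simp add: epi_def)
qed

lemma proper_finite:
  assumes "proper_fun \<phi>" "\<phi> w < \<infinity>" shows "\<phi> w = ereal (real_of_ereal (\<phi> w))"
  using assms unfolding proper_fun_def by (cases "\<phi> w") auto

lemma fenchel_ineq:
  assumes "fconj \<phi> y = ereal c" "proper_fun \<phi>"
  shows "\<phi> w \<ge> ereal (inner w y - c)"
proof -
  have 1: "ereal (inner w y) - \<phi> w \<le> ereal c" using fconj_ge[of w y \<phi>] assms(1) by simp
  show ?thesis
  proof (cases "\<phi> w")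
    case (real r) thus ?thesis using 1 by simp
  next
    case PInf thus ?thesis by simp
  next
    case MInf thus ?thesis using assms(2) unfolding proper_fun_def by auto
  qed
qed

lemma fm_point:
  fixes g :: "'a::euclidean_space \<Rightarrow> ereal"
  assumes gp: "proper_fun g" and gc: "convex_fun g" and gl: "lsc_fun g"
    and gz: "fconj g z = ereal c"
    and sub: "\<forall>y. fconj g y \<ge> ereal c + ereal (inner v (y - z))"
  shows "g v = ereal (inner v z - c)"
proof -
  have ge: "g v \<ge> ereal (inner v z - c)" by (rule fenchel_ineq[OF gz gp])
  define \<kappa> where "\<kappa> = inner v z - c"
  have "\<not> g v > ereal \<kappa>"
  proof
    assume gt: "g v > ereal \<kappa>"
    obtain \<alpha> where al: "\<kappa> < \<alpha>" "ereal \<alpha> < g v"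
    proof (cases "g v")
      case (real r) thus ?thesis using gt that[of "(\<kappa> + r)/2"] by auto
    next
      case PInf thus ?thesis using that[of "\<kappa>+1"] by auto
    next
      case MInf thus ?thesis using gt by auto
    qed
    have "(v, \<alpha>) \<notin> epi g" using al by (auto simp: epi_def)
    then obtain a b where ab: "inner a (v, \<alpha>) < b" "\<forall>x\<in>epi g. inner a x > b"
      using separating_hyperplane_closed_point[OF epi_convex[OF gc] epi_closed[OF gl]] by blast
    obtain a1 a2 where a: "a = (a1, a2)" by fastforce
    have ab1: "inner a1 v + a2 * \<alpha> < b" using ab(1) a by simp
    have ab2: "inner a1 w + a2 * t > b" if "g w \<le> ereal t" for w t
      using ab(2) that a by (auto simp: epi_def)
    obtain w0 where w0: "g w0 < \<infinity>" using gp unfolding proper_fun_def by blast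
    define t0 where "t0 = real_of_ereal (g w0)"
    have gw0: "g w0 = ereal t0" using proper_finite[OF gp w0] t0_def by simp
    have a2: "a2 \<ge> 0"
    proof (rule ccontr)
      assume "\<not> a2 \<ge> 0"
      hence neg: "a2 < 0" by simp
      have pos: "inner a1 w0 + a2 * t0 - b > 0" using ab2[of w0 t0] gw0 by simp
      define T where "T = t0 + (inner a1 w0 + a2 * t0 - b) / (- a2) + 1"
      have "T \<ge> t0" using pos neg unfolding T_def by (simp add: divide_nonneg_pos)
      hence "g w0 \<le> ereal T" using gw0 by simp
      hence "inner a1 w0 + a2 * T > b" by (rule ab2)
      moreover have "a2 * T = a2 * t0 - (inner a1 w0 + a2 * t0 - b) + a2"
        unfolding T_def using neg by (simp add: field_simps)
      ultimately show False using neg by simp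
    qed
    define y where "y = (1 / (a2 + 1)) *\<^sub>R (z - a1)"
    define \<beta>0 where "\<beta>0 = (b - c) / (a2 + 1)"
    have "fconj g y \<le> ereal (- \<beta>0)"
    proof (rule fconj_le)
      fix w
      show "ereal (inner w y) - g w \<le> ereal (- \<beta>0)"
      proof (cases "g w = \<infinity>")
        case True thus ?thesis by simp
      next
        case False
        define t where "t = real_of_ereal (g w)"
        have gw: "g w = ereal t" using proper_finite[OF gp] False t_def by (simp add: top.not_eq_extremum)
        have 1: "inner a1 w + a2 * t > b" using ab2[of w t] gw by simp
        have 2: "t \<ge> inner w z - c" using fenchel_ineq[OF gz gp, of w] gw by simp
        have "(a2 + 1) * t > b - inner a1 w + inner w z - c" using 1 2 by (simp add: algebra_simps)
        hence "t > (b - inner a1 w + inner w z - c) / (a2 + 1)" using a2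
          by (simp add: pos_divide_less_eq mult.commute)
        moreover have "inner w y = (inner w z - inner a1 w) / (a2 + 1)"
          unfolding y_def by (simp add: inner_diff_right inner_commute)
        ultimately have "inner w y - t < - \<beta>0" unfolding \<beta>0_def using a2
          by (simp add: field_simps)
        thus ?thesis using gw by simp
      qed
    qed
    moreover have "fconj g y \<ge> ereal c + ereal (inner v (y - z))" using sub by blast
    ultimately have "ereal (c + inner v (y - z)) \<le> ereal (- \<beta>0)" by (metis order_trans plus_ereal.simps(1))
    hence 3: "c + inner v (y - z) \<le> - \<beta>0" by simp
    have vy: "(a2 + 1) * inner v y = inner v z - inner v a1"
      unfolding y_def using a2 by (simp add: inner_diff_right)
    have b0: "(a2 + 1) * \<beta>0 = b - c" unfolding \<beta>0_def using a2 by simp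
    have "(a2 + 1) * (c + inner v y - inner v z + \<beta>0) = (a2 + 1) * c + (a2 + 1) * inner v y - (a2 + 1) * inner v z + (a2 + 1) * \<beta>0"
      by (simp add: algebra_simps)
    also have "\<dots> = - a2 * \<kappa> + b - inner a1 v" unfolding vy b0 \<kappa>_def by (simp add: algebra_simps inner_commute)
    finally have "(a2 + 1) * (c + inner v y - inner v z + \<beta>0) = - a2 * \<kappa> + b - inner a1 v" .
    moreover have "(a2 + 1) * (c + inner v y - inner v z + \<beta>0) \<le> 0"
      using 3 a2 by (simp add: mult_nonneg_nonpos inner_diff_right)
    moreover have "a2 * \<kappa> \<le> a2 * \<alpha>" using a2 al by (simp add: mult_left_mono)
    ultimately show False using ab1 by simp
  qed
  hence "g v \<le> ereal \<kappa>" by (simp add: not_less)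
  thus ?thesis using ge unfolding \<kappa>_def by (rule antisym)
qed

lemma ereal_between:
  assumes "ereal a < x" obtains b where "a < b" "ereal b < x"
proof (cases x)
  case (real r) thus ?thesis using assms that[of "(a + r)/2"] by auto
next
  case PInf thus ?thesis using that[of "a+1"] by auto
next
  case MInf thus ?thesis using assms by auto
qed

lemma Gpoint_sub:
  assumes gp: "proper_fun g" and gz: "fconj g z = ereal c" and p: "g p \<le> ereal (inner p z - c)"
  shows "g p = ereal (inner p z - c)" "z \<in> csubdiff g p"
proof -
  show gpz: "g p = ereal (inner p z - c)" using p fenchel_ineq[OF gz gp, of p] by (rule antisym)
  have "\<forall>w. g w \<ge> g p + ereal (inner z (w - p))"
  proof
    fix w
    have "g p + ereal (inner z (w - p)) = ereal (inner w z - c)"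
      using gpz by (simp add: inner_diff_right inner_commute)
    also have "\<dots> \<le> g w" by (rule fenchel_ineq[OF gz gp])
    finally show "g w \<ge> g p + ereal (inner z (w - p))" .
  qed
  thus "z \<in> csubdiff g p" unfolding csubdiff_def using gpz by simp
qed

lemma Gpoint_unique:
  fixes g :: "'a::euclidean_space \<Rightarrow> ereal"
  assumes gp: "proper_fun g" and gc: "convex_fun g" and es: "ess_strictly_convex g"
    and gz: "fconj g z = ereal c"
    and v: "g v \<le> ereal (inner v z - c)" and p: "g p \<le> ereal (inner p z - c)"
  shows "p = v"
proof (rule ccontr)
  assume ne: "p \<noteq> v"
  have gv: "g v = ereal (inner v z - c)" using Gpoint_sub[OF gp gz v] by simp
  have gpp: "g p = ereal (inner p z - c)" using Gpoint_sub[OF gp gz p] by simp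
  have seg: "g (t *\<^sub>R v + (1 - t) *\<^sub>R p) \<le> ereal (inner (t *\<^sub>R v + (1 - t) *\<^sub>R p) z - c)"
    if "0 \<le> t" "t \<le> 1" for t
  proof -
    have "g (t *\<^sub>R v + (1 - t) *\<^sub>R p) \<le> ereal t * g v + ereal (1 - t) * g p"
      using gc that unfolding convex_fun_def by blast
    also have "\<dots> = ereal (inner (t *\<^sub>R v + (1 - t) *\<^sub>R p) z - c)"
      unfolding gv gpp by (simp add: inner_add_left algebra_simps)
    finally show ?thesis .
  qed
  define C where "C = closed_segment p v"
  have "convex C" unfolding C_def by simp
  moreover have "C \<subseteq> {x. csubdiff g x \<noteq> {}}"
  proof
    fix x assume "x \<in> C"
    then obtain t where t: "0 \<le> t" "t \<le> 1" "x = t *\<^sub>R v + (1 - t) *\<^sub>R p"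
      unfolding C_def closed_segment_def by (auto simp: algebra_simps)
    show "x \<in> {x. csubdiff g x \<noteq> {}}" using Gpoint_sub(2)[OF gp gz seg[OF t(1,2)]] t(3) by auto
  qed
  ultimately have sc: "\<forall>x\<in>C. \<forall>y\<in>C. \<forall>t. x \<noteq> y \<and> 0 < t \<and> t < 1 \<longrightarrow>
         g (t *\<^sub>R x + (1 - t) *\<^sub>R y) < ereal t * g x + ereal (1 - t) * g y"
    using es unfolding ess_strictly_convex_def by blast
  have "v \<in> C" "p \<in> C" unfolding C_def by auto
  hence "g ((1/2) *\<^sub>R v + (1 - 1/2) *\<^sub>R p) < ereal (1/2) * g v + ereal (1 - 1/2) * g p"
    by (rule sc[rule_format]) (use ne \<open>v \<in> C\<close> \<open>p \<in> C\<close> in auto)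
  also have "\<dots> = ereal (inner ((1/2) *\<^sub>R v + (1 - 1/2) *\<^sub>R p) z - c)"
    unfolding gv gpp by (simp add: inner_add_left field_simps)
  also have "\<dots> \<le> g ((1/2) *\<^sub>R v + (1 - 1/2) *\<^sub>R p)" by (rule fenchel_ineq[OF gz gp])
  finally show False by simp
qed

lemma conj_smooth:
  fixes g :: "'a::euclidean_space \<Rightarrow> ereal"
  assumes gp: "proper_fun g" and gc: "convex_fun g" and gl: "lsc_fun g" and es: "ess_strictly_convex g"
    and gz: "fconj g z = ereal c"
    and sub: "\<forall>y. fconj g y \<ge> ereal c + ereal (inner v (y - z))"
    and e: "e > 0"
  shows "\<exists>d>0. \<forall>z'. norm (z' - z) < d \<longrightarrow> fconj g z' < \<infinity> \<longrightarrow>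
           fconj g z' \<le> ereal (c + inner v (z' - z) + e * norm (z' - z))"
proof (rule ccontr)
  assume nd: "\<not> ?thesis"
  have gv: "g v = ereal (inner v z - c)" by (rule fm_point[OF gp gc gl gz sub])
  have H: "\<exists>z'. norm (z' - z) < d \<and> fconj g z' < \<infinity> \<and>
           ereal (c + inner v (z' - z) + e * norm (z' - z)) < fconj g z'" if "d > 0" for d
    using nd that by (auto simp: not_le)
  have "\<forall>n. \<exists>z'. norm (z' - z) < 1 / Suc n \<and> fconj g z' < \<infinity> \<and>
           ereal (c + inner v (z' - z) + e * norm (z' - z)) < fconj g z'"
    using H by simp
  from choice[OF this] obtain zs where zs: "\<And>n. norm (zs n - z) < 1 / Suc n"
     "\<And>n. fconj g (zs n) < \<infinity>"
     "\<And>n. ereal (c + inner v (zs n - z) + e * norm (zs n - z)) < fconj g (zs n)" by blast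
  define t where "t n = norm (zs n - z)" for n
  define F where "F n = real_of_ereal (fconj g (zs n))" for n
  have F: "fconj g (zs n) = ereal (F n)" for n
  proof -
    have "fconj g (zs n) \<noteq> -\<infinity>" using zs(3)[of n] by auto
    thus ?thesis using zs(2)[of n] unfolding F_def by (cases "fconj g (zs n)") auto
  qed
  have Fgt: "F n > c + inner v (zs n - z) + e * t n" for n using zs(3)[of n] F[of n] t_def by simp
  have tpos: "t n > 0" for n
  proof (rule ccontr)
    assume "\<not> t n > 0"
    hence "zs n = z" unfolding t_def by simp
    thus False using Fgt[of n] F[of n] gz t_def by simp
  qed
  have "\<forall>n. \<exists>w. ereal (F n - e / 2 * t n) < ereal (inner w (zs n)) - g w"
  proof
    fix n
    have "ereal (F n - e / 2 * t n) < fconj g (zs n)" using F[of n] e tpos[of n] by simp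
    thus "\<exists>w. ereal (F n - e / 2 * t n) < ereal (inner w (zs n)) - g w"
      unfolding fconj_def less_SUP_iff by blast
  qed
  from choice[OF this] obtain ws where ws: "\<And>n. ereal (F n - e / 2 * t n) < ereal (inner (ws n) (zs n)) - g (ws n)"
    by blast
  define G where "G n = real_of_ereal (g (ws n))" for n
  have G: "g (ws n) = ereal (G n)" for n
  proof -
    have "g (ws n) \<noteq> \<infinity>" using ws[of n] by auto
    thus ?thesis using gp unfolding G_def proper_fun_def by (cases "g (ws n)") auto
  qed
  have i: "inner (ws n) (zs n) - G n > F n - e / 2 * t n" for n using ws[of n] G[of n] by simp
  have iii: "G n \<ge> inner (ws n) z - c" for n using fenchel_ineq[OF gz gp, of "ws n"] G[of n] by simp
  have key: "inner (ws n - v) (zs n - z) > e / 2 * t n" for n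
    using i[of n] Fgt[of n] iii[of n] by (simp add: inner_diff_left inner_diff_right algebra_simps)
  have wv: "norm (ws n - v) > e / 2" for n
  proof -
    have "e / 2 * t n < norm (ws n - v) * t n"
      using key[of n] norm_cauchy_schwarz[of "ws n - v" "zs n - z"] t_def by simp
    thus ?thesis using tpos[of n] by (simp add: mult_less_cancel_right)
  qed
  define lam where "lam n = (e / 2) / norm (ws n - v)" for n
  have lm: "0 < lam n" "lam n < 1" "lam n * norm (ws n - v) = e / 2" for n
  proof -
    have nz: "norm (ws n - v) > 0" using wv[of n] e by linarith
    show "0 < lam n" unfolding lam_def using nz e by simp
    show "lam n < 1" unfolding lam_def using nz wv[of n] by simp
    show "lam n * norm (ws n - v) = e / 2" unfolding lam_def using nz by simp
  qed
  define ps where "ps n = lam n *\<^sub>R ws n + (1 - lam n) *\<^sub>R v" for n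
  have gps: "g (ps n) \<le> ereal (inner (ps n) z - c + e / 2 * t n)" for n
  proof -
    have "g (ps n) \<le> ereal (lam n) * g (ws n) + ereal (1 - lam n) * g v"
      using gc lm[of n] unfolding convex_fun_def ps_def by auto
    also have "\<dots> = ereal (lam n * G n + (1 - lam n) * (inner v z - c))" using G gv by simp
    also have "lam n * G n + (1 - lam n) * (inner v z - c) \<le> inner (ps n) z - c + e / 2 * t n"
    proof -
      have iv: "G n \<le> inner (ws n) (zs n) - c - inner v (zs n - z)"
        using i[of n] Fgt[of n] mult_pos_pos[OF e tpos[of n]] by linarith
      have "lam n * G n \<le> lam n * (inner (ws n) (zs n) - c - inner v (zs n - z))"
        using iv lm(1)[of n] by (simp add: mult_left_mono)
      moreover have "lam n * (inner (ws n) (zs n) - c - inner v (zs n - z)) + (1 - lam n) * (inner v z - c)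
          = inner (ps n) z - c + lam n * inner (ws n - v) (zs n - z)"
        unfolding ps_def by (simp add: inner_diff_left inner_diff_right inner_add_left algebra_simps)
      moreover have "lam n * inner (ws n - v) (zs n - z) \<le> lam n * (norm (ws n - v) * t n)"
        using norm_cauchy_schwarz[of "ws n - v" "zs n - z"] lm(1)[of n] t_def
        by (simp add: mult_left_mono)
      moreover have "lam n * (norm (ws n - v) * t n) = e / 2 * t n"
        using lm(3)[of n] by (simp add: mult.assoc[symmetric])
      ultimately show ?thesis by linarith
    qed
    hence "ereal (lam n * G n + (1 - lam n) * (inner v z - c)) \<le> ereal (inner (ps n) z - c + e / 2 * t n)"
      by simp
    finally show ?thesis .
  qed
  have sph: "ps n \<in> sphere v (e / 2)" for n
  proof -
    have "ps n - v = lam n *\<^sub>R (ws n - v)" unfolding ps_def by (simp add: algebra_simps)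
    hence "norm (ps n - v) = e / 2" using lm[of n] by simp
    thus ?thesis by (simp add: dist_norm norm_minus_commute)
  qed
  obtain l r where l: "l \<in> sphere v (e / 2)" and r: "strict_mono r" and lim: "(ps \<circ> r) \<longlonglongrightarrow> l"
    using compact_imp_seq_compact[OF compact_sphere, of v "e/2"] sph unfolding seq_compact_def by blast
  have t0: "t \<longlonglongrightarrow> 0"
  proof (rule tendsto_sandwich[of "\<lambda>_. 0" _ _ "\<lambda>n. 1 / Suc n"])
    show "\<forall>\<^sub>F n in sequentially. 0 \<le> t n" using tpos by (simp add: less_imp_le)
    show "\<forall>\<^sub>F n in sequentially. t n \<le> 1 / Suc n" using zs(1) t_def by (simp add: less_imp_le)
    show "(\<lambda>n. 1 / real (Suc n)) \<longlonglongrightarrow> 0" by (rule LIMSEQ_Suc[OF lim_1_over_n])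
  qed simp
  have "g l \<le> ereal (inner l z - c + e / 2 * 0)"
  proof (rule lsc_seq[OF gl lim])
    show "g ((ps \<circ> r) n) \<le> ereal (inner (ps (r n)) z - c + e / 2 * t (r n))" for n using gps by simp
    show "(\<lambda>n. inner (ps (r n)) z - c + e / 2 * t (r n)) \<longlonglongrightarrow> inner l z - c + e / 2 * 0"
      using lim LIMSEQ_subseq_LIMSEQ[OF t0 r]
      by (intro tendsto_intros) (auto simp: o_def)
  qed
  hence "l = v" using Gpoint_unique[OF gp gc es gz] gv by simp
  thus False using l e by simp
qed

lemma fconj_convex:
  assumes a1: "fconj g y1 = ereal a1" and a2: "fconj g y2 = ereal a2" and t: "0 \<le> t" "t \<le> 1"
  shows "fconj g ((1 - t) *\<^sub>R y1 + t *\<^sub>R y2) \<le> ereal ((1 - t) * a1 + t * a2)"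
proof (rule fconj_le)
  fix w
  show "ereal (inner w ((1 - t) *\<^sub>R y1 + t *\<^sub>R y2)) - g w \<le> ereal ((1 - t) * a1 + t * a2)"
  proof (cases "g w")
    case (real G)
    have "ereal (inner w y1) - g w \<le> ereal a1" using fconj_ge[of w y1 g] a1 by simp
    hence 1: "inner w y1 - G \<le> a1" using real by simp
    have "ereal (inner w y2) - g w \<le> ereal a2" using fconj_ge[of w y2 g] a2 by simp
    hence 2: "inner w y2 - G \<le> a2" using real by simp
    have "inner w ((1 - t) *\<^sub>R y1 + t *\<^sub>R y2) - G = (1 - t) * (inner w y1 - G) + t * (inner w y2 - G)"
      by (simp add: inner_add_right algebra_simps)
    also have "\<dots> \<le> (1 - t) * a1 + t * a2"
      using 1 2 t by (intro add_mono mult_left_mono) auto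
    finally show ?thesis using real by simp
  next
    case PInf thus ?thesis by simp
  next
    case MInf
    have "ereal (inner w y1) - g w \<le> ereal a1" using fconj_ge[of w y1 g] a1 by simp
    thus ?thesis using MInf by simp
  qed
qed

lemma fconj_lower:
  assumes "proper_fun g" obtains w0 g0 where "\<And>y. fconj g y \<ge> ereal (inner w0 y - g0)"
proof -
  obtain w0 where w0: "g w0 < \<infinity>" using assms unfolding proper_fun_def by blast
  define g0 where "g0 = real_of_ereal (g w0)"
  have "g w0 = ereal g0" using proper_finite[OF assms w0] g0_def by simp
  hence "fconj g y \<ge> ereal (inner w0 y - g0)" for y using fconj_ge[of w0 y g] by simp
  thus ?thesis using that by blast
qed

lemma sq_bound:
  fixes s A B :: real
  assumes "s \<ge> 0" "B \<ge> 0" "s^2 \<le> A + B * s"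
  shows "s \<le> \<bar>A\<bar> + B + 1"
proof (cases "s \<le> 1")
  case True thus ?thesis using assms by linarith
next
  case False
  hence "s * s \<le> (\<bar>A\<bar> + B) * s" using assms by (simp add: power2_eq_square algebra_simps) (smt (verit) mult_le_cancel_right1)
  hence "s \<le> \<bar>A\<bar> + B" using False by (simp add: mult_le_cancel_right)
  thus ?thesis by simp
qed

lemma norm_sq_expand:
  fixes a b :: "'a::real_inner"
  shows "(norm (a + t *\<^sub>R b))\<^sup>2 = (norm a)\<^sup>2 + 2 * t * inner a b + t\<^sup>2 * (norm b)\<^sup>2"
  unfolding power2_norm_eq_inner by (simp add: inner_add_left inner_add_right inner_commute algebra_simps power2_eq_square)

lemma prox_char:
  fixes g :: "'a::euclidean_space \<Rightarrow> ereal"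
  assumes gp: "proper_fun g" and k: "\<kappa> > 0"
    and fin: "fconj g (prox (fconj g) \<kappa> p) < \<infinity>"
  defines "z \<equiv> prox (fconj g) \<kappa> p"
  shows "fconj g z = ereal (real_of_ereal (fconj g z))"
    and "\<forall>w. fconj g w \<ge> fconj g z + ereal (inner ((1 / \<kappa>) *\<^sub>R (p - z)) (w - z))"
proof -
  obtain w0 g0 where low: "\<And>y. fconj g y \<ge> ereal (inner w0 y - g0)" using fconj_lower[OF gp] by blast
  have finite_conj: "fconj g y = ereal (real_of_ereal (fconj g y))" if "fconj g y < \<infinity>" for y
  proof -
    have "fconj g y \<noteq> -\<infinity>" using low[of y] by auto
    thus ?thesis using that by (cases "fconj g y") auto
  qed
  show fz: "fconj g z = ereal (real_of_ereal (fconj g z))" using finite_conj fin z_def by simp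
  define q where "q y = (norm (y - p))\<^sup>2 / (2 * \<kappa>)" for y
  define \<phi> where "\<phi> y = fconj g y + ereal (q y)" for y
  have minimizer_eq: "(\<forall>w. fconj g y + ereal ((norm (y - p))\<^sup>2 / (2 * \<kappa>))
                           \<le> fconj g w + ereal ((norm (w - p))\<^sup>2 / (2 * \<kappa>))) \<longleftrightarrow> (\<forall>w. \<phi> y \<le> \<phi> w)" for y
    unfolding \<phi>_def q_def by simp
  define LB where "LB = inner w0 p - \<kappa> * (norm w0)\<^sup>2 / 2 - g0"
  have phiLB: "\<phi> y \<ge> ereal LB" for y
  proof -
    have "0 \<le> (norm ((y - p) + \<kappa> *\<^sub>R w0))\<^sup>2 / (2 * \<kappa>)" using k by simp
    also have "\<dots> = q y + inner w0 (y - p) + \<kappa> * (norm w0)\<^sup>2 / 2"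
      unfolding norm_sq_expand q_def using k by (simp add: field_simps power2_eq_square inner_commute)
    finally have "LB \<le> inner w0 y - g0 + q y" unfolding LB_def by (simp add: inner_diff_right)
    hence "ereal LB \<le> ereal (inner w0 y - g0) + ereal (q y)" by simp
    also have "\<dots> \<le> \<phi> y" unfolding \<phi>_def by (intro add_right_mono low)
    finally show ?thesis .
  qed
  define I where "I = (INF y. \<phi> y)"
  have "I \<le> \<phi> z" unfolding I_def by (rule INF_lower) simp
  also have "\<phi> z < \<infinity>" unfolding \<phi>_def using fz by (metis PInfty_neq_ereal(1) fin less_ereal.simps(4) plus_ereal.simps(1))
  finally have Ilt: "I < \<infinity>" .
  have "I \<ge> ereal LB" unfolding I_def by (rule INF_greatest) (use phiLB in auto)
  then obtain Ir where Ir: "I = ereal Ir" using Ilt by (cases I) auto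
  have "\<forall>n. \<exists>y. \<phi> y < ereal (Ir + 1 / Suc n)"
  proof
    fix n
    have "I < ereal (Ir + 1 / Suc n)" using Ir by simp
    thus "\<exists>y. \<phi> y < ereal (Ir + 1 / Suc n)" unfolding I_def INF_less_iff by blast
  qed
  from choice[OF this] obtain ys where ys: "\<And>n. \<phi> (ys n) < ereal (Ir + 1 / Suc n)" by blast
  define F where "F n = real_of_ereal (fconj g (ys n))" for n
  have F: "fconj g (ys n) = ereal (F n)" for n
  proof -
    have "fconj g (ys n) < \<infinity>" using ys[of n] unfolding \<phi>_def by (cases "fconj g (ys n)") auto
    thus ?thesis using finite_conj F_def by simp
  qed
  have Fq: "F n + q (ys n) < Ir + 1 / Suc n" for n using ys[of n] F[of n] unfolding \<phi>_def by simp
  have Flow: "F n \<ge> inner w0 (ys n) - g0" for n using low[of "ys n"] F[of n] by simp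
  define R where "R = \<bar>2 * \<kappa> * (Ir + 1 + g0 - inner w0 p)\<bar> + 2 * \<kappa> * norm w0 + 1"
  have bnd: "ys n \<in> cball p R" for n
  proof -
    define s where "s = norm (ys n - p)"
    have "inner w0 (ys n) = inner w0 p + inner w0 (ys n - p)" by (simp add: inner_diff_right)
    moreover have "inner w0 (ys n - p) \<ge> - (norm w0 * s)"
      using Cauchy_Schwarz_ineq2[of w0 "ys n - p"] unfolding s_def by (simp add: abs_le_iff)
    moreover have "1 / real (Suc n) \<le> 1" by simp
    ultimately have "q (ys n) < Ir + 1 + g0 - inner w0 p + norm w0 * s"
      using Fq[of n] Flow[of n] by linarith
    hence "s\<^sup>2 / (2 * \<kappa>) < Ir + 1 + g0 - inner w0 p + norm w0 * s" unfolding q_def s_def .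
    have k2: "2 * \<kappa> > 0" using k by simp
    have "s\<^sup>2 < (Ir + 1 + g0 - inner w0 p + norm w0 * s) * (2 * \<kappa>)"
      by (rule pos_divide_less_eq[OF k2, THEN iffD1]) fact
    hence "s\<^sup>2 < 2 * \<kappa> * (Ir + 1 + g0 - inner w0 p) + (2 * \<kappa> * norm w0) * s"
      by (simp add: algebra_simps)
    hence "s \<le> R" unfolding R_def by (intro sq_bound) (use k s_def in auto)
    thus ?thesis unfolding s_def by (simp add: dist_norm norm_minus_commute)
  qed
  obtain ystar r where r: "strict_mono r" and lim: "(ys \<circ> r) \<longlonglongrightarrow> ystar"
    using compact_imp_seq_compact[OF compact_cball, of p R] bnd unfolding seq_compact_def by blast
  have qlim: "(\<lambda>n. q (ys (r n))) \<longlonglongrightarrow> q ystar"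
    unfolding q_def using lim k by (intro tendsto_intros) (auto simp: o_def)
  have "fconj g ystar \<le> ereal (Ir - q ystar)"
  proof (rule fconj_le)
    fix w
    show "ereal (inner w ystar) - g w \<le> ereal (Ir - q ystar)"
    proof (cases "g w")
      case (real G)
      have "inner w ystar - G + q ystar \<le> Ir"
      proof (rule LIMSEQ_le)
        show "(\<lambda>n. inner w (ys (r n)) - G + q (ys (r n))) \<longlonglongrightarrow> inner w ystar - G + q ystar"
          using lim qlim by (intro tendsto_intros) (auto simp: o_def)
        show "(\<lambda>n. Ir + 1 / Suc (r n)) \<longlonglongrightarrow> Ir"
        proof -
          have "(\<lambda>n. 1 / real (Suc n)) \<longlonglongrightarrow> 0" by (rule LIMSEQ_Suc[OF lim_1_over_n])
          from LIMSEQ_subseq_LIMSEQ[OF this r] have "(\<lambda>n. 1 / real (Suc (r n))) \<longlonglongrightarrow> 0" by (simp add: o_def)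
          from tendsto_add[OF tendsto_const this] show ?thesis by simp
        qed
        show "\<exists>N. \<forall>n\<ge>N. inner w (ys (r n)) - G + q (ys (r n)) \<le> Ir + 1 / Suc (r n)"
        proof (intro exI allI impI)
          fix n
          have "ereal (inner w (ys (r n))) - g w \<le> fconj g (ys (r n))" by (rule fconj_ge)
          hence "inner w (ys (r n)) - G \<le> F (r n)" using real F by simp
          thus "inner w (ys (r n)) - G + q (ys (r n)) \<le> Ir + 1 / Suc (r n)" using Fq[of "r n"] by linarith
        qed
      qed
      thus ?thesis using real by simp
    next
      case PInf thus ?thesis by simp
    next
      case MInf
      have "ereal (inner w ystar) - g w \<le> fconj g ystar" by (rule fconj_ge)
      hence "fconj g ystar = \<infinity>" using MInf by simp
      moreover have "fconj g (ys 0) \<ge> ereal (inner w (ys 0)) - g w" by (rule fconj_ge)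
      hence "fconj g (ys 0) = \<infinity>" using MInf by simp
      thus ?thesis using F[of 0] by simp
    qed
  qed
  hence phistar: "\<phi> ystar \<le> I" unfolding \<phi>_def Ir
    by (metis add_right_mono diff_add_cancel plus_ereal.simps(1))
  have ismin: "\<forall>w. \<phi> ystar \<le> \<phi> w"
  proof
    fix w show "\<phi> ystar \<le> \<phi> w" using phistar unfolding I_def by (meson INF_lower UNIV_I order_trans)
  qed
  have uniq: "y1 = y2" if m1: "\<forall>w. \<phi> y1 \<le> \<phi> w" and m2: "\<forall>w. \<phi> y2 \<le> \<phi> w" for y1 y2
  proof -
    have e12: "\<phi> y1 = \<phi> y2" using m1 m2 by (simp add: antisym)
    have "\<phi> y1 \<le> \<phi> ystar" using m1 by simp
    hence "\<phi> y1 \<le> ereal Ir" using phistar Ir by simp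
    hence fin1: "\<phi> y1 < \<infinity>" by (rule le_less_trans) simp
    have "fconj g y1 < \<infinity>" using fin1 unfolding \<phi>_def by (cases "fconj g y1") auto
    then obtain a1 where a1: "fconj g y1 = ereal a1" using finite_conj by blast
    have "fconj g y2 < \<infinity>" using fin1 e12 unfolding \<phi>_def by (cases "fconj g y2") auto
    then obtain a2 where a2: "fconj g y2 = ereal a2" using finite_conj by blast
    have v12: "a1 + q y1 = a2 + q y2" using e12 a1 a2 unfolding \<phi>_def by simp
    define mid where "mid = (1 - 1/2) *\<^sub>R y1 + (1/2) *\<^sub>R y2"
    have cm: "fconj g mid \<le> ereal ((1 - 1/2) * a1 + (1/2) * a2)"
      unfolding mid_def by (rule fconj_convex[OF a1 a2]) auto
    have qmid: "q mid = q y1 / 2 + q y2 / 2 - (norm (y1 - y2))\<^sup>2 / (8 * \<kappa>)"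
    proof -
      have "mid - p = (y1 - p) + (1/2) *\<^sub>R (y2 - y1)" unfolding mid_def by (simp add: algebra_simps flip: scaleR_add_left)
      hence "(norm (mid - p))\<^sup>2 = (norm (y1 - p))\<^sup>2 + 2 * (1/2) * inner (y1 - p) (y2 - y1) + (1/2)\<^sup>2 * (norm (y2 - y1))\<^sup>2"
        by (simp only: norm_sq_expand)
      moreover have "(norm (y2 - p))\<^sup>2 = (norm ((y1 - p) + 1 *\<^sub>R (y2 - y1)))\<^sup>2" by simp
      hence "(norm (y2 - p))\<^sup>2 = (norm (y1 - p))\<^sup>2 + 2 * inner (y1 - p) (y2 - y1) + (norm (y2 - y1))\<^sup>2"
        by (simp only: norm_sq_expand) simp
      moreover have "norm (y2 - y1) = norm (y1 - y2)" by (rule norm_minus_commute)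
      ultimately have E0: "(norm (mid - p))\<^sup>2 = (norm (y1 - p))\<^sup>2 + inner (y1 - p) (y2 - y1) + (norm (y1 - y2))\<^sup>2 / 4"
          "(norm (y2 - p))\<^sup>2 = (norm (y1 - p))\<^sup>2 + 2 * inner (y1 - p) (y2 - y1) + (norm (y1 - y2))\<^sup>2"
        by (simp_all add: power2_eq_square)
      hence E: "(norm (mid - p))\<^sup>2 = (norm (y1 - p))\<^sup>2 / 2 + (norm (y2 - p))\<^sup>2 / 2 - (norm (y1 - y2))\<^sup>2 / 4"
        by linarith
      show ?thesis unfolding q_def E using k by (simp add: field_simps)
    qed
    have "\<phi> y1 \<le> \<phi> mid" using m1 by simp
    also have "\<phi> mid \<le> ereal ((1 - 1/2) * a1 + (1/2) * a2 + q mid)"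
      unfolding \<phi>_def using cm by (metis add_right_mono plus_ereal.simps(1))
    finally have "a1 + q y1 \<le> (1 - 1/2) * a1 + (1/2) * a2 + q mid" using a1 unfolding \<phi>_def by simp
    hence "(norm (y1 - y2))\<^sup>2 / (8 * \<kappa>) \<le> 0" using qmid v12 by simp
    hence "(norm (y1 - y2))\<^sup>2 \<le> 0" using k by (simp add: divide_le_0_iff)
    thus ?thesis by simp
  qed
  have ex1: "\<exists>!y. \<forall>w. \<phi> y \<le> \<phi> w" using ismin uniq by blast
  have zmin: "\<forall>w. \<phi> z \<le> \<phi> w"
  proof -
    have "z = (THE y. \<forall>w. \<phi> y \<le> \<phi> w)" unfolding z_def prox_def minimizer_eq ..
    thus ?thesis using theI'[OF ex1] by simp
  qed
  define fzr where "fzr = real_of_ereal (fconj g z)"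
  have fzr: "fconj g z = ereal fzr" using fz fzr_def by simp
  show "\<forall>w. fconj g w \<ge> fconj g z + ereal (inner ((1 / \<kappa>) *\<^sub>R (p - z)) (w - z))"
  proof
    fix w
    show "fconj g w \<ge> fconj g z + ereal (inner ((1 / \<kappa>) *\<^sub>R (p - z)) (w - z))"
    proof (cases "fconj g w = \<infinity>")
      case True thus ?thesis by simp
    next
      case False
      hence "fconj g w < \<infinity>" by (simp add: top.not_eq_extremum)
      then obtain Gw where Gw: "fconj g w = ereal Gw" using finite_conj by blast
      define lin where "lin = inner (p - z) (w - z) / \<kappa>"
      have "Gw - fzr \<ge> lin"
      proof (rule ccontr)
        assume nt: "\<not> ?thesis"
        define D where "D = lin - (Gw - fzr)"
        have D: "D > 0" using nt D_def by simp
        define N where "N = (norm (w - z))\<^sup>2"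
        define t where "t = min 1 (\<kappa> * D / (N + 1))"
        have N0: "N \<ge> 0" unfolding N_def by simp
        have t: "0 < t" "t \<le> 1" unfolding t_def using k D N0 by auto
        have tN: "t * N / (2 * \<kappa>) < D"
        proof -
          have "t \<le> \<kappa> * D / (N + 1)" unfolding t_def by simp
          hence "t * N \<le> \<kappa> * D / (N + 1) * N" using N0 by (rule mult_right_mono)
          also have "\<dots> < \<kappa> * D" using k D N0 by (simp add: field_simps)
          finally have "t * N < \<kappa> * D" .
          moreover have "\<kappa> * D > 0" using k D by simp
          moreover have "2 * \<kappa> * D = 2 * (\<kappa> * D)" by simp
          ultimately have "t * N < 2 * \<kappa> * D" by linarith
          thus ?thesis using k by (simp add: divide_less_eq mult.commute)
        qed
        define zt where "zt = (1 - t) *\<^sub>R z + t *\<^sub>R w"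
        have c1: "fconj g zt \<le> ereal ((1 - t) * fzr + t * Gw)"
          unfolding zt_def by (rule fconj_convex[OF fzr Gw]) (use t in auto)
        have "\<phi> z \<le> \<phi> zt" using zmin by simp
        also have "\<phi> zt \<le> ereal ((1 - t) * fzr + t * Gw + q zt)"
          unfolding \<phi>_def using c1 by (metis add_right_mono plus_ereal.simps(1))
        finally have ineq: "fzr + q z \<le> (1 - t) * fzr + t * Gw + q zt" using fzr unfolding \<phi>_def by simp
        have "zt - p = (z - p) + t *\<^sub>R (w - z)" unfolding zt_def by (simp add: algebra_simps)
        hence "(norm (zt - p))\<^sup>2 = (norm (z - p))\<^sup>2 + 2 * t * inner (z - p) (w - z) + t\<^sup>2 * N"
          unfolding N_def by (simp only: norm_sq_expand)
        hence qzt: "q zt = q z + t * (2 * inner (z - p) (w - z) + t * N) / (2 * \<kappa>)"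
          unfolding q_def using k by (simp add: field_simps power2_eq_square)
        have "t * fzr \<le> t * Gw + t * (2 * inner (z - p) (w - z) + t * N) / (2 * \<kappa>)"
          using ineq qzt by (simp add: algebra_simps)
        hence "t * fzr \<le> t * (Gw + (2 * inner (z - p) (w - z) + t * N) / (2 * \<kappa>))"
          by (simp add: algebra_simps)
        hence "fzr \<le> Gw + (2 * inner (z - p) (w - z) + t * N) / (2 * \<kappa>)"
          using t by (simp add: mult_le_cancel_left_pos)
        also have "(2 * inner (z - p) (w - z) + t * N) / (2 * \<kappa>) = - lin + t * N / (2 * \<kappa>)"
          unfolding lin_def using k by (simp add: field_simps inner_diff_left inner_diff_right inner_commute)
        finally show False using tN D_def by simp
      qed
      moreover have "inner ((1 / \<kappa>) *\<^sub>R (p - z)) (w - z) = lin" unfolding lin_def by simp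
      ultimately show ?thesis using Gw fzr by simp
    qed
  qed
qed

lemma edom_convex:
  assumes "convex_fun f" shows "convex (edom f)"
proof (rule convexI)
  fix x y :: 'a and u v :: real
  assume xy: "x \<in> edom f" "y \<in> edom f" and uv: "0 \<le> u" "0 \<le> v" "u + v = 1"
  have v: "v = 1 - u" using uv by simp
  have "f (u *\<^sub>R x + v *\<^sub>R y) \<le> ereal u * f x + ereal v * f y"
    using assms uv unfolding convex_fun_def v by auto
  also have "\<dots> < \<infinity>"
  proof -
    have "f x < \<infinity>" "f y < \<infinity>" using xy by (auto simp: edom_def)
    hence "ereal u * f x < \<infinity>" "ereal v * f y < \<infinity>"
      using uv by (cases "f x"; cases "f y"; auto)+
    thus ?thesis by simp
  qed
  finally show "u *\<^sub>R x + v *\<^sub>R y \<in> edom f" by (simp add: edom_def)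
qed

lemma subgrad_bounded:
  fixes f :: "'p::euclidean_space \<Rightarrow> ereal"
  assumes fp: "proper_fun f" and fc: "convex_fun f" and C: "compact C" and Cs: "C \<subseteq> interior (edom f)"
  shows "\<exists>B>0. \<forall>c\<in>C. \<forall>y\<in>csubdiff f c. norm y \<le> B"
proof -
  define Op where "Op = interior (edom f)"
  have oO: "open Op" unfolding Op_def by simp
  obtain r where r: "r > 0" "(\<Union>c\<in>C. cball c r) \<subseteq> Op"
    using compact_subset_open_imp_cball_epsilon_subset[OF C oO Cs[folded Op_def]] by blast
  have cO: "convex Op" unfolding Op_def using edom_convex[OF fc] by simp
  define fr where "fr x = real_of_ereal (f x)" for x
  have ffin: "f x = ereal (fr x)" if "x \<in> Op" for x
  proof -
    have "f x < \<infinity>" using that interior_subset[of "edom f"] unfolding Op_def edom_def by auto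
    thus ?thesis unfolding fr_def using proper_finite[OF fp] by simp
  qed
  have cvx: "convex_on Op fr"
  proof (rule convex_onI[OF _ cO])
    fix t :: real and x y assume t: "0 < t" "t < 1" and xy: "x \<in> Op" "y \<in> Op"
    have m: "(1 - t) *\<^sub>R x + t *\<^sub>R y \<in> Op" using cO xy t unfolding convex_alt by auto
    have "f (t *\<^sub>R y + (1 - t) *\<^sub>R x) \<le> ereal t * f y + ereal (1 - t) * f x"
      using fc t unfolding convex_fun_def by auto
    hence "ereal (fr ((1 - t) *\<^sub>R x + t *\<^sub>R y)) \<le> ereal ((1 - t) * fr x + t * fr y)"
      using ffin[OF m] ffin[OF xy(1)] ffin[OF xy(2)] by (simp add: add.commute)
    thus "fr ((1 - t) *\<^sub>R x + t *\<^sub>R y) \<le> (1 - t) * fr x + t * fr y" by simp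
  qed
  have cont: "continuous_on Op fr" by (rule convex_on_continuous[OF oO cvx])
  define C' where "C' = {x + y | x y. x \<in> C \<and> y \<in> cball 0 r}"
  have cC': "compact C'" unfolding C'_def by (rule compact_sums[OF C compact_cball])
  have CsubOp: "C' \<subseteq> Op"
  proof
    fix w assume "w \<in> C'"
    then obtain c d where "w = c + d" "c \<in> C" "d \<in> cball 0 r" unfolding C'_def by blast
    hence "w \<in> cball c r" by (simp add: dist_norm)
    thus "w \<in> Op" using r(2) \<open>c \<in> C\<close> by blast
  qed
  have "compact (fr ` C')" by (rule compact_continuous_image[OF continuous_on_subset[OF cont CsubOp] cC'])
  hence "bounded (fr ` C')" by (rule compact_imp_bounded)
  then obtain B0 where "\<forall>x\<in>fr ` C'. norm x \<le> B0" unfolding bounded_iff by blast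
  hence B0: "\<forall>x\<in>C'. norm (fr x) \<le> B0" by blast
  have main: "norm y \<le> 2 * B0 / r" if c: "c \<in> C" and y: "y \<in> csubdiff f c" for c y
  proof (cases "y = 0")
    case True
    have "c + 0 \<in> C'" unfolding C'_def using c r by force
    hence "norm (fr c) \<le> B0" using B0 by simp
    hence "B0 \<ge> 0" by (meson norm_ge_zero order_trans)
    thus ?thesis using True r by simp
  next
    case False
    define d where "d = (r / norm y) *\<^sub>R y"
    have nd: "norm d = r" unfolding d_def using False r by simp
    have "c + d \<in> C'" unfolding C'_def using c nd by force
    moreover have "c + 0 \<in> C'" unfolding C'_def using c r by force
    ultimately have b1: "\<bar>fr (c + d)\<bar> \<le> B0" "\<bar>fr c\<bar> \<le> B0" using B0 by auto
    have cO': "c \<in> Op" "c + d \<in> Op" using CsubOp \<open>c + d \<in> C'\<close> \<open>c + 0 \<in> C'\<close> by auto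
    have "\<bar>f c\<bar> \<noteq> \<infinity>" using ffin[OF cO'(1)] by simp
    hence "\<forall>w. f w \<ge> f c + ereal (inner y (w - c))" using y unfolding csubdiff_def by auto
    hence "f (c + d) \<ge> f c + ereal (inner y ((c + d) - c))" by blast
    hence "fr (c + d) \<ge> fr c + inner y d" using ffin[OF cO'(1)] ffin[OF cO'(2)] by simp
    moreover have "inner y d = r * norm y" unfolding d_def using False
      by (simp add: power2_norm_eq_inner[symmetric] power2_eq_square)
    ultimately have "r * norm y \<le> 2 * B0" using b1 by linarith
    thus ?thesis using r by (simp add: field_simps)
  qed
  show ?thesis
  proof (intro exI[of _ "\<bar>2 * B0 / r\<bar> + 1"] conjI ballI)
    fix c y assume "c \<in> C" "y \<in> csubdiff f c"
    hence "norm y \<le> 2 * B0 / r" by (rule main)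
    thus "norm y \<le> \<bar>2 * B0 / r\<bar> + 1" by linarith
  qed (smt (verit) abs_ge_zero)
qed

lemma frac_frechet:
  fixes D1 \<psi>1 e CP CD CQ :: real
  assumes D1: "D1 > 0" and p1: "\<psi>1 > 0" and e: "e > 0" and CP: "CP \<ge> 0" and CD: "CD \<ge> 0" and CQ: "CQ \<ge> 0"
  shows "\<exists>e1>0. \<exists>d>0. \<forall>r a b lP lD. 0 \<le> r \<longrightarrow> r < d \<longrightarrow> \<bar>lP\<bar> \<le> CP * r \<longrightarrow> \<bar>lD\<bar> \<le> CD * r \<longrightarrow>
      a \<ge> \<psi>1 + lP - e1 * r - CQ * r\<^sup>2 \<longrightarrow> 0 < b \<longrightarrow> b \<le> D1 + lD + CQ * r\<^sup>2 \<longrightarrow>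
      a / b \<ge> \<psi>1 / D1 + (lP - \<psi>1 / D1 * lD) / D1 - e * r"
proof -
  define \<theta> where "\<theta> = \<psi>1 / D1"
  have th: "\<theta> > 0" "\<theta> * D1 = \<psi>1" unfolding \<theta>_def using D1 p1 by auto
  define Cl where "Cl = CP + \<theta> * CD"
  define K where "K = CQ * (1 + \<theta>) + (CD + CQ) * (Cl / D1 + e)"
  define e1 where "e1 = e * D1 / 2"
  have e1: "e1 > 0" unfolding e1_def using e D1 by simp
  have K: "K \<ge> 0" unfolding K_def Cl_def using CQ CD CP th D1 e by simp
  define d where "d = min 1 (min (\<psi>1 / (CP + e1 + CQ + 1)) (e1 / (K + 1)))"
  have d: "d > 0" unfolding d_def using p1 e1 K CP CQ by simp
  show ?thesis
  proof (rule exI[of _ e1], intro conjI e1, rule exI[of _ d], intro conjI d allI impI)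
    fix r a b lP lD
    assume r0: "0 \<le> r" and rd: "r < d" and lP: "\<bar>lP\<bar> \<le> CP * r" and lD: "\<bar>lD\<bar> \<le> CD * r"
      and a: "a \<ge> \<psi>1 + lP - e1 * r - CQ * r\<^sup>2" and b0: "0 < b" and b: "b \<le> D1 + lD + CQ * r\<^sup>2"
    have r1: "r \<le> 1" using rd unfolding d_def by simp
    have r2: "r\<^sup>2 \<le> r" using r0 r1 by (simp add: power2_eq_square mult_left_le)
    have r2': "r\<^sup>2 \<ge> 0" by simp
    have ra: "r * (CP + e1 + CQ + 1) < \<psi>1"
    proof -
      have "r < \<psi>1 / (CP + e1 + CQ + 1)" using rd unfolding d_def by simp
      thus ?thesis using CP e1 CQ by (simp add: pos_less_divide_eq)
    qed
    have rK: "K * r \<le> e1"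
    proof -
      have "r < e1 / (K + 1)" using rd unfolding d_def by simp
      hence "r * (K + 1) < e1" using K by (simp add: pos_less_divide_eq)
      moreover have "K * r \<le> r * (K + 1)" using r0 by (simp add: algebra_simps)
      ultimately show ?thesis by simp
    qed
    have "CQ * r\<^sup>2 \<le> CQ * r" using r2 CQ by (simp add: mult_left_mono)
    hence a0: "a \<ge> 0" using a lP ra r0 abs_ge_minus_self[of lP] by (simp add: algebra_simps)
    define l where "l = lP - \<theta> * lD"
    have l: "\<bar>l\<bar> \<le> Cl * r"
    proof -
      have "\<bar>l\<bar> \<le> \<bar>lP\<bar> + \<theta> * \<bar>lD\<bar>" unfolding l_def
      proof -
        have "\<bar>\<theta> * lD\<bar> = \<theta> * \<bar>lD\<bar>" using th by (simp add: abs_mult)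
        thus "\<bar>lP - \<theta> * lD\<bar> \<le> \<bar>lP\<bar> + \<theta> * \<bar>lD\<bar>" using abs_triangle_ineq4[of lP "\<theta> * lD"] by linarith
      qed
      also have "\<dots> \<le> CP * r + \<theta> * (CD * r)" using lP lD th by (intro add_mono mult_left_mono) auto
      finally show ?thesis unfolding Cl_def by (simp add: algebra_simps)
    qed
    define T where "T = \<theta> + l / D1 - e * r"
    have goal_eq: "\<psi>1 / D1 + (lP - \<psi>1 / D1 * lD) / D1 - e * r = T" unfolding T_def l_def \<theta>_def ..
    have "T \<le> a / b"
    proof (cases "T \<le> 0")
      case True
      have "a / b \<ge> 0" using a0 b0 by simp
      thus "T \<le> a / b" using True by simp
    next
      case False
      hence T: "T > 0" by simp
      define q where "q = CQ * r\<^sup>2"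
      have q: "0 \<le> q" "q \<le> CQ * r" unfolding q_def using CQ r2 by (auto simp: mult_left_mono)
      define bb where "bb = D1 + lD + q"
      have "b * T \<le> bb * T" using b T unfolding bb_def q_def by (simp add: mult_right_mono)
      have ident: "bb * T = \<psi>1 + lP - e * r * D1 + \<theta> * q + (lD + q) * (l / D1 - e * r)"
        unfolding bb_def T_def l_def th(2)[symmetric] using D1 by (simp add: field_simps)
      have m1: "\<bar>lD + q\<bar> \<le> (CD + CQ) * r" using lD q by (simp add: algebra_simps)
      have m2: "\<bar>l / D1 - e * r\<bar> \<le> (Cl / D1 + e) * r"
      proof -
        have "\<bar>l / D1 - e * r\<bar> \<le> \<bar>l\<bar> / D1 + e * r" using D1 e r0 by (simp add: abs_triangle_ineq4[THEN order_trans])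
        also have "\<dots> \<le> Cl * r / D1 + e * r" using l D1 by (simp add: divide_right_mono)
        finally show ?thesis by (simp add: algebra_simps)
      qed
      have "(lD + q) * (l / D1 - e * r) \<le> \<bar>lD + q\<bar> * \<bar>l / D1 - e * r\<bar>"
        by (metis abs_ge_self abs_mult)
      also have "\<dots> \<le> ((CD + CQ) * r) * ((Cl / D1 + e) * r)"
        by (rule mult_mono[OF m1 m2]) (use CD CQ r0 in auto)
      also have "\<dots> = (CD + CQ) * (Cl / D1 + e) * r\<^sup>2" by (simp add: power2_eq_square algebra_simps add_divide_distrib)
      finally have m3: "(lD + q) * (l / D1 - e * r) \<le> (CD + CQ) * (Cl / D1 + e) * r\<^sup>2" .
      have "K * r\<^sup>2 \<le> e1 * r" using rK r0 by (simp add: power2_eq_square mult_right_mono mult.assoc[symmetric])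
      hence "CQ * (1 + \<theta>) * r\<^sup>2 + (CD + CQ) * (Cl / D1 + e) * r\<^sup>2 \<le> e1 * r"
        unfolding K_def by (simp add: algebra_simps)
      moreover have "e * r * D1 = 2 * (e1 * r)" unfolding e1_def by simp
      moreover have "CQ * (1 + \<theta>) * r\<^sup>2 = CQ * r\<^sup>2 + \<theta> * q" unfolding q_def by (simp add: algebra_simps)
      ultimately have "bb * T \<le> a" using ident m3 a unfolding q_def by linarith
      hence "b * T \<le> a" using \<open>b * T \<le> bb * T\<close> by simp
      thus "T \<le> a / b" using b0 by (simp add: pos_le_divide_eq mult.commute)
    qed
    thus "a / b \<ge> \<psi>1 / D1 + (lP - \<psi>1 / D1 * lD) / D1 - e * r" using goal_eq by simp
  qed
qed

lemma ereal_div: "b \<noteq> 0 \<Longrightarrow> ereal a / ereal b = ereal (a / b)"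
  unfolding divide_ereal_def by (simp add: divide_real_def)
lemma ereal_div_inf: "b > 0 \<Longrightarrow> \<infinity> / ereal b = \<infinity>"
  unfolding divide_ereal_def by simp

lemma gamma_frechet:
  fixes S :: "'n::euclidean_space set" and A :: "'n \<Rightarrow> 's::euclidean_space" and K :: "'n \<Rightarrow> 'p::euclidean_space"
    and g :: "'s \<Rightarrow> ereal" and f :: "'p \<Rightarrow> ereal" and h :: "'n \<Rightarrow> real" and gradh :: "'n \<Rightarrow> 'n"
  assumes lin: "linear A" "linear K"
    and gp: "proper_fun g" and gc: "convex_fun g" and gl: "lsc_fun g" and es: "ess_strictly_convex g"
    and x1S: "x1 \<in> S" and Nn: "\<forall>x'\<in>S. inner N (x' - x1) \<le> 0"
    and hd: "(h has_derivative (\<lambda>w. inner (gradh x1) w)) (at x1)"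
    and fF: "fconj f y1 = ereal F1" and fsub: "\<forall>y. fconj f y \<ge> ereal F1 + ereal (inner (K x0) (y - y1))"
    and gG: "fconj g z1 = ereal G1" and gsub: "\<forall>y. fconj g y \<ge> ereal G1 + ereal (inner (A x1 - \<gamma> *\<^sub>R z1) (y - z1))"
    and Dm: "inner (K x1) y1 - F1 > m / 2" and m: "m > 0"
    and psi: "inner z1 (A x1) + h x1 + \<delta> / 2 * (norm (x1 - u1))\<^sup>2 - \<gamma> / 2 * (norm z1)\<^sup>2 - G1 > 0"
  defines "D1 \<equiv> inner (K x1) y1 - F1"
    and "\<psi>1 \<equiv> inner z1 (A x1) + h x1 + \<delta> / 2 * (norm (x1 - u1))\<^sup>2 - \<gamma> / 2 * (norm z1)\<^sup>2 - G1"
  shows "(1 / D1) *\<^sub>R (adjoint A z1 + gradh x1 + \<delta> *\<^sub>R (x1 - u1) + N - (\<psi>1 / D1) *\<^sub>R adjoint K y1,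
            - (\<psi>1 / D1) *\<^sub>R (K x1 - K x0), 0::'s, - \<delta> *\<^sub>R (x1 - u1))
         \<in> fsubdiff (Gamma S A K g f h \<delta> \<gamma> m) (x1, y1, z1, u1)"
proof -
  define \<theta> where "\<theta> = \<psi>1 / D1"
  have D1: "D1 > m / 2" "D1 > 0" using Dm m unfolding D1_def by auto
  have p1: "\<psi>1 > 0" using psi unfolding \<psi>1_def .
  obtain BA where BA: "BA > 0" "\<And>x. norm (A x) \<le> BA * norm x" using linear_bounded_pos[OF lin(1)] by blast
  obtain BK where BK: "BK > 0" "\<And>x. norm (K x) \<le> BK * norm x" using linear_bounded_pos[OF lin(2)] by blast
  define gx where "gx = adjoint A z1 + gradh x1 + \<delta> *\<^sub>R (x1 - u1)"
  define gu where "gu = - \<delta> *\<^sub>R (x1 - u1)"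
  define Vx where "Vx = gx + N - \<theta> *\<^sub>R adjoint K y1"
  define Vy where "Vy = - \<theta> *\<^sub>R (K x1 - K x0)"
  define V where "V = (1 / D1) *\<^sub>R (Vx, Vy, 0::'s, gu)"
  have Veq: "V = (1 / D1) *\<^sub>R (adjoint A z1 + gradh x1 + \<delta> *\<^sub>R (x1 - u1) + N - \<theta> *\<^sub>R adjoint K y1,
            - \<theta> *\<^sub>R (K x1 - K x0), 0::'s, - \<delta> *\<^sub>R (x1 - u1))"
    unfolding V_def Vx_def Vy_def gx_def gu_def \<theta>_def ..
  define \<Gamma> where "\<Gamma> = Gamma S A K g f h \<delta> \<gamma> m"
  have dom1: "y1 \<in> edom (fconj f)" "z1 \<in> edom (fconj g)" using fF gG by (auto simp: edom_def)
  have GP: "\<Gamma> (x1, y1, z1, u1) = ereal (\<psi>1 / D1)"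
  proof -
    have "ereal (inner (K x1) y1) - fconj f y1 = ereal D1" using fF unfolding D1_def by simp
    moreover have "Psi S A g h x1 z1 u1 \<delta> \<gamma> = ereal \<psi>1" using x1S gG unfolding Psi_def \<psi>1_def by simp
    ultimately show ?thesis unfolding \<Gamma>_def Gamma_def using dom1 D1 by (simp add: ereal_div ereal_div_inf)
  qed
  have "\<forall>e>0. \<exists>d>0. \<forall>w. norm (w - (x1, y1, z1, u1)) < d \<longrightarrow>
          \<Gamma> w \<ge> \<Gamma> (x1, y1, z1, u1) + ereal (inner V (w - (x1, y1, z1, u1)) - e * norm (w - (x1, y1, z1, u1)))"
  proof (intro allI impI)
    fix e :: real assume e: "e > 0"
    define CP where "CP = norm (gx + N) + norm gu"
    define CD where "CD = norm (adjoint K y1) + norm (K x1 - K x0)"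
    define CQ where "CQ = BA + 2 * \<bar>\<delta>\<bar> + \<bar>\<gamma>\<bar> / 2 + BK"
    have CPD: "CP \<ge> 0" "CD \<ge> 0" "CQ \<ge> 0" unfolding CP_def CD_def CQ_def using BA BK by auto
    obtain e1 d0 where e1: "e1 > 0" and d0: "d0 > 0" and fr: "\<forall>r a b lP lD. 0 \<le> r \<longrightarrow> r < d0 \<longrightarrow> \<bar>lP\<bar> \<le> CP * r \<longrightarrow> \<bar>lD\<bar> \<le> CD * r \<longrightarrow>
      a \<ge> \<psi>1 + lP - e1 * r - CQ * r\<^sup>2 \<longrightarrow> 0 < b \<longrightarrow> b \<le> D1 + lD + CQ * r\<^sup>2 \<longrightarrow>
      a / b \<ge> \<psi>1 / D1 + (lP - \<psi>1 / D1 * lD) / D1 - e * r"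
      using frac_frechet[OF D1(2) p1 e CPD] by blast
    have e12: "e1 / 2 > 0" using e1 by simp
    obtain dh where dh: "dh > 0" "\<forall>y. norm (y - x1) < dh \<longrightarrow>
        norm (h y - h x1 - inner (gradh x1) (y - x1)) \<le> e1 / 2 * norm (y - x1)"
      using hd[unfolded has_derivative_at_alt] e12 by blast
    obtain dg where dg: "dg > 0" "\<forall>z'. norm (z' - z1) < dg \<longrightarrow> fconj g z' < \<infinity> \<longrightarrow>
           fconj g z' \<le> ereal (G1 + inner (A x1 - \<gamma> *\<^sub>R z1) (z' - z1) + e1 / 2 * norm (z' - z1))"
      using conj_smooth[OF gp gc gl es gG gsub e12] by blast
    define d where "d = min d0 (min dh dg)"
    have d: "d > 0" unfolding d_def using d0 dh dg by simp
    show "\<exists>d>0. \<forall>w. norm (w - (x1, y1, z1, u1)) < d \<longrightarrow>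
          \<Gamma> w \<ge> \<Gamma> (x1, y1, z1, u1) + ereal (inner V (w - (x1, y1, z1, u1)) - e * norm (w - (x1, y1, z1, u1)))"
    proof (intro exI[of _ d] conjI d allI impI)
      fix w :: "'n \<times> 'p \<times> 's \<times> 'n"
      assume wd: "norm (w - (x1, y1, z1, u1)) < d"
      obtain x' y' z' u' where w: "w = (x', y', z', u')" by (cases w) auto
      define r where "r = norm (w - (x1, y1, z1, u1))"
      define dx where "dx = x' - x1"
      define dy where "dy = y' - y1"
      define dz where "dz = z' - z1"
      define du where "du = u' - u1"
      have wP: "w - (x1, y1, z1, u1) = (dx, dy, dz, du)" unfolding w dx_def dy_def dz_def du_def by simp
      have nr: "norm dx \<le> r" "norm dy \<le> r" "norm dz \<le> r" "norm du \<le> r"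
      proof -
        have a1: "norm dx \<le> norm (dx, dy, dz, du)" "norm (dy, dz, du) \<le> norm (dx, dy, dz, du)"
          by (rule norm_fst_le, rule norm_snd_le)
        have a2: "norm dy \<le> norm (dy, dz, du)" "norm (dz, du) \<le> norm (dy, dz, du)"
          by (rule norm_fst_le, rule norm_snd_le)
        have a3: "norm dz \<le> norm (dz, du)" "norm du \<le> norm (dz, du)"
          by (rule norm_fst_le, rule norm_snd_le)
        show "norm dx \<le> r" "norm dy \<le> r" "norm dz \<le> r" "norm du \<le> r"
          unfolding r_def wP using a1 a2 a3 by linarith+
      qed
      have r0: "r \<ge> 0" unfolding r_def by simp
      have rd: "r < d0" "r < dh" "r < dg" using wd unfolding r_def d_def by auto
      have IP: "inner V (w - (x1, y1, z1, u1)) = (inner (gx + N) dx + inner gu du - \<theta> * (inner (adjoint K y1) dx + inner (K x1 - K x0) dy)) / D1"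
        unfolding wP V_def Vx_def Vy_def by (simp add: inner_diff_left inner_add_left algebra_simps add_divide_distrib diff_divide_distrib)
      show "\<Gamma> w \<ge> \<Gamma> (x1, y1, z1, u1) + ereal (inner V (w - (x1, y1, z1, u1)) - e * norm (w - (x1, y1, z1, u1)))"
      proof (cases "y' \<in> edom (fconj f) \<and> ereal (inner (K x') y') - fconj f y' > ereal (m / 2) \<and> z' \<in> edom (fconj g)")
        case False
        hence "\<Gamma> w = \<infinity>" unfolding \<Gamma>_def Gamma_def w by auto
        thus ?thesis by simp
      next
        case True
        have flow: "fconj f y' \<ge> ereal (F1 + inner (K x0) dy)" using fsub unfolding dy_def by (metis plus_ereal.simps(1))
        obtain F' where F': "fconj f y' = ereal F'"
          using True flow by (cases "fconj f y'") (auto simp: edom_def)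
        have glow: "fconj g z' \<ge> ereal (G1 + inner (A x1 - \<gamma> *\<^sub>R z1) dz)" using gsub unfolding dz_def by (metis plus_ereal.simps(1))
        obtain G' where G': "fconj g z' = ereal G'"
          using True glow by (cases "fconj g z'") (auto simp: edom_def)
        define den where "den = inner (K x') y' - F'"
        have den: "den > m / 2" using True F' unfolding den_def by simp
        have den0: "den > 0" using den m by simp
        show ?thesis
        proof (cases "x' \<in> S")
          case False
          have "Psi S A g h x' z' u' \<delta> \<gamma> = \<infinity>" using False G' unfolding Psi_def by simp
          hence "\<Gamma> w = \<infinity>" unfolding \<Gamma>_def Gamma_def w using True F' den0 unfolding den_def
            by (simp add: ereal_div ereal_div_inf)
          thus ?thesis by simp
        next
          case xS: True
          define \<psi>' where "\<psi>' = inner z' (A x') + h x' + \<delta> / 2 * (norm (x' - u'))\<^sup>2 - \<gamma> / 2 * (norm z')\<^sup>2 - G'"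
          have Gw: "\<Gamma> w = ereal (\<psi>' / den)"
          proof -
            have "ereal (inner (K x') y') - fconj f y' = ereal den" using F' unfolding den_def by simp
            moreover have "Psi S A g h x' z' u' \<delta> \<gamma> = ereal \<psi>'" using xS G' unfolding Psi_def \<psi>'_def by simp
            ultimately show ?thesis unfolding \<Gamma>_def Gamma_def w using True den0 by (simp add: ereal_div ereal_div_inf)
          qed
          define lP where "lP = inner (gx + N) dx + inner gu du"
          define lD where "lD = inner (adjoint K y1) dx + inner (K x1 - K x0) dy"
          have lP: "\<bar>lP\<bar> \<le> CP * r"
          proof -
            have "\<bar>lP\<bar> \<le> norm (gx + N) * norm dx + norm gu * norm du"
              unfolding lP_def using Cauchy_Schwarz_ineq2[of "gx + N" dx] Cauchy_Schwarz_ineq2[of gu du] by linarith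
            also have "\<dots> \<le> norm (gx + N) * r + norm gu * r"
              using nr by (intro add_mono mult_left_mono) auto
            finally show ?thesis unfolding CP_def by (simp add: algebra_simps)
          qed
          have lD: "\<bar>lD\<bar> \<le> CD * r"
          proof -
            have "\<bar>lD\<bar> \<le> norm (adjoint K y1) * norm dx + norm (K x1 - K x0) * norm dy"
              unfolding lD_def using Cauchy_Schwarz_ineq2[of "adjoint K y1" dx] Cauchy_Schwarz_ineq2[of "K x1 - K x0" dy] by linarith
            also have "\<dots> \<le> norm (adjoint K y1) * r + norm (K x1 - K x0) * r"
              using nr by (intro add_mono mult_left_mono) auto
            finally show ?thesis unfolding CD_def by (simp add: algebra_simps)
          qed
          have A1: "inner z' (A x') = inner z1 (A x1) + inner (A x1) dz + inner (adjoint A z1) dx + inner dz (A dx)"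
          proof -
            have "A x' = A x1 + A dx" unfolding dx_def using linear_diff[OF lin(1)] by simp
            moreover have "z' = z1 + dz" unfolding dz_def by simp
            moreover have "inner z1 (A dx) = inner (adjoint A z1) dx"
              using adjoint_works[OF lin(1), of dx z1] by (simp add: inner_commute)
            ultimately show ?thesis by (simp add: inner_add_left inner_add_right inner_commute)
          qed
          have A2: "inner dz (A dx) \<ge> - (BA * r\<^sup>2)"
          proof -
            have "\<bar>inner dz (A dx)\<bar> \<le> norm dz * norm (A dx)" by (rule Cauchy_Schwarz_ineq2)
            also have "\<dots> \<le> r * (BA * r)"
            proof -
              have "norm (A dx) \<le> BA * r" using BA(2)[of dx] mult_left_mono[OF nr(1), of BA] BA(1) by linarith
              thus ?thesis using nr r0 by (intro mult_mono) auto
            qed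
            finally show ?thesis by (simp add: power2_eq_square algebra_simps)
          qed
          have H1: "h x' \<ge> h x1 + inner (gradh x1) dx - e1 / 2 * r"
          proof -
            have "norm (x' - x1) < dh" using nr rd unfolding dx_def by linarith
            hence "\<bar>h x' - h x1 - inner (gradh x1) dx\<bar> \<le> e1 / 2 * norm dx" using dh(2) unfolding dx_def by auto
            moreover have "e1 / 2 * norm dx \<le> e1 / 2 * r" using nr e1 by (simp add: mult_left_mono)
            ultimately show ?thesis by linarith
          qed
          have Q1: "(norm (x' - u'))\<^sup>2 = (norm (x1 - u1))\<^sup>2 + 2 * inner (x1 - u1) (dx - du) + (norm (dx - du))\<^sup>2"
          proof -
            have "x' - u' = (x1 - u1) + 1 *\<^sub>R (dx - du)" unfolding dx_def du_def by simp
            hence "(norm (x' - u'))\<^sup>2 = (norm (x1 - u1))\<^sup>2 + 2 * 1 * inner (x1 - u1) (dx - du) + 1\<^sup>2 * (norm (dx - du))\<^sup>2"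
              by (simp only: norm_sq_expand)
            thus ?thesis by simp
          qed
          have Q2: "\<delta> / 2 * (norm (dx - du))\<^sup>2 \<ge> - (2 * \<bar>\<delta>\<bar> * r\<^sup>2)"
          proof -
            have "norm (dx - du) \<le> 2 * r" using norm_triangle_ineq4[of dx du] nr by linarith
            hence "(norm (dx - du))\<^sup>2 \<le> (2 * r)\<^sup>2" by (intro power_mono) auto
            hence "\<bar>\<delta>\<bar> / 2 * (norm (dx - du))\<^sup>2 \<le> \<bar>\<delta>\<bar> / 2 * (2 * r)\<^sup>2" by (intro mult_left_mono) auto
            moreover have "\<delta> / 2 * (norm (dx - du))\<^sup>2 \<ge> - (\<bar>\<delta>\<bar> / 2 * (norm (dx - du))\<^sup>2)"
              by (cases "\<delta> \<ge> 0") (auto simp: mult_nonneg_nonneg)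
            ultimately show ?thesis by (simp add: power2_eq_square algebra_simps)
          qed
          have Z1: "(norm z')\<^sup>2 = (norm z1)\<^sup>2 + 2 * inner z1 dz + (norm dz)\<^sup>2"
          proof -
            have "z' = z1 + 1 *\<^sub>R dz" unfolding dz_def by simp
            hence "(norm z')\<^sup>2 = (norm z1)\<^sup>2 + 2 * 1 * inner z1 dz + 1\<^sup>2 * (norm dz)\<^sup>2"
              by (simp only: norm_sq_expand)
            thus ?thesis by simp
          qed
          have Z2: "- (\<gamma> / 2 * (norm dz)\<^sup>2) \<ge> - (\<bar>\<gamma>\<bar> / 2 * r\<^sup>2)"
          proof -
            have "(norm dz)\<^sup>2 \<le> r\<^sup>2" using nr by (intro power_mono) auto
            hence "\<bar>\<gamma>\<bar> / 2 * (norm dz)\<^sup>2 \<le> \<bar>\<gamma>\<bar> / 2 * r\<^sup>2" by (intro mult_left_mono) auto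
            moreover have "\<gamma> / 2 * (norm dz)\<^sup>2 \<le> \<bar>\<gamma>\<bar> / 2 * (norm dz)\<^sup>2"
              by (intro mult_right_mono) auto
            ultimately show ?thesis by linarith
          qed
          have G2: "G' \<le> G1 + inner (A x1 - \<gamma> *\<^sub>R z1) dz + e1 / 2 * r"
          proof -
            have "norm (z' - z1) < dg" using nr rd unfolding dz_def by linarith
            hence "fconj g z' \<le> ereal (G1 + inner (A x1 - \<gamma> *\<^sub>R z1) dz + e1 / 2 * norm dz)"
              using dg(2) G' unfolding dz_def by auto
            hence "G' \<le> G1 + inner (A x1 - \<gamma> *\<^sub>R z1) dz + e1 / 2 * norm dz" using G' by simp
            moreover have "e1 / 2 * norm dz \<le> e1 / 2 * r" using nr e1 by (simp add: mult_left_mono)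
            ultimately show ?thesis by linarith
          qed
          have Nx: "inner N dx \<le> 0" using Nn xS unfolding dx_def by blast
          have lin1: "lP = inner (adjoint A z1) dx + inner (gradh x1) dx + \<delta> * inner (x1 - u1) dx + inner N dx - \<delta> * inner (x1 - u1) du"
            unfolding lP_def gx_def gu_def by (simp add: inner_add_left inner_diff_left)
          have lin2: "inner (A x1 - \<gamma> *\<^sub>R z1) dz = inner (A x1) dz - \<gamma> * inner z1 dz"
            by (simp add: inner_diff_left)
          have lin3: "inner (x1 - u1) (dx - du) = inner (x1 - u1) dx - inner (x1 - u1) du"
            by (simp add: inner_diff_right)
          have cq: "CQ * r\<^sup>2 = BA * r\<^sup>2 + 2 * \<bar>\<delta>\<bar> * r\<^sup>2 + \<bar>\<gamma>\<bar> / 2 * r\<^sup>2 + BK * r\<^sup>2"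
            unfolding CQ_def by (simp add: algebra_simps)
          have BKr: "BK * r\<^sup>2 \<ge> 0" using BK by simp
          have num: "\<psi>' \<ge> \<psi>1 + lP - e1 * r - CQ * r\<^sup>2"
          proof -
            have "\<psi>' = inner z1 (A x1) + inner (A x1) dz + inner (adjoint A z1) dx + inner dz (A dx) + h x'
                  + (\<delta> / 2 * (norm (x1 - u1))\<^sup>2 + \<delta> * inner (x1 - u1) (dx - du) + \<delta> / 2 * (norm (dx - du))\<^sup>2)
                  - (\<gamma> / 2 * (norm z1)\<^sup>2 + \<gamma> * inner z1 dz + \<gamma> / 2 * (norm dz)\<^sup>2) - G'"
              unfolding \<psi>'_def A1 Q1 Z1 by (simp add: algebra_simps)
            moreover have "\<delta> * inner (x1 - u1) (dx - du) = \<delta> * inner (x1 - u1) dx - \<delta> * inner (x1 - u1) du"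
              unfolding lin3 by (simp add: algebra_simps)
            ultimately show ?thesis
              using A2 H1 Q2 Z2 G2 Nx lin1 lin2 cq BKr unfolding \<psi>1_def by linarith
          qed
          have dn: "den \<le> D1 + lD + CQ * r\<^sup>2"
          proof -
            have F'low: "F' \<ge> F1 + inner (K x0) dy" using flow F' by simp
            have "K x' = K x1 + K dx" unfolding dx_def using linear_diff[OF lin(2)] by simp
            moreover have "y' = y1 + dy" unfolding dy_def by simp
            moreover have "inner (K dx) y1 = inner (adjoint K y1) dx"
              using adjoint_works[OF lin(2), of dx y1] by (simp add: inner_commute)
            ultimately have e1': "inner (K x') y' = inner (K x1) y1 + inner (adjoint K y1) dx + inner (K x1) dy + inner (K dx) dy"
              by (simp add: inner_add_left inner_add_right)
            have "\<bar>inner (K dx) dy\<bar> \<le> norm (K dx) * norm dy" by (rule Cauchy_Schwarz_ineq2)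
            also have "\<dots> \<le> (BK * r) * r"
            proof -
              have "norm (K dx) \<le> BK * r" using BK(2)[of dx] mult_left_mono[OF nr(1), of BK] BK(1) by linarith
              thus ?thesis using nr r0 BK(1) by (intro mult_mono) auto
            qed
            finally have "inner (K dx) dy \<le> BK * r\<^sup>2" by (simp add: power2_eq_square algebra_simps)
            moreover have "inner (K x1 - K x0) dy = inner (K x1) dy - inner (K x0) dy" by (simp add: inner_diff_left)
            moreover have "BA * r\<^sup>2 \<ge> 0" "\<bar>\<delta>\<bar> * r\<^sup>2 \<ge> 0" "\<bar>\<gamma>\<bar> / 2 * r\<^sup>2 \<ge> 0" using BA by auto
            ultimately show ?thesis using e1' F'low cq unfolding den_def D1_def lD_def by linarith
          qed
          have "\<psi>' / den \<ge> \<psi>1 / D1 + (lP - \<psi>1 / D1 * lD) / D1 - e * r"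
            using fr rd(1) r0 lP lD num den0 dn by blast
          moreover have "inner V (w - (x1, y1, z1, u1)) = (lP - \<psi>1 / D1 * lD) / D1"
            unfolding IP lP_def lD_def \<theta>_def ..
          ultimately have "\<psi>' / den \<ge> \<psi>1 / D1 + (inner V (w - (x1, y1, z1, u1)) - e * r)" by simp
          thus ?thesis unfolding Gw GP r_def by simp
        qed
      qed
    qed
  qed
  hence "V \<in> fsubdiff \<Gamma> (x1, y1, z1, u1)" unfolding fsubdiff_def using GP by simp
  thus ?thesis unfolding Veq \<Gamma>_def \<theta>_def .
qed

lemma lin_comb_bound:
  fixes a b c pa pb pc X :: real
  assumes "a \<ge> 0" "b \<ge> 0" "c \<ge> 0" "pa \<ge> 0" "pb \<ge> 0" "pc \<ge> 0" "X \<le> pa * a + pb * b + pc * c"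
  shows "X \<le> (pa + pb + pc + 1) * (a + b + c)"
proof -
  have "pa * a \<le> (pa + pb + pc + 1) * a" using assms by (intro mult_right_mono) auto
  moreover have "pb * b \<le> (pa + pb + pc + 1) * b" using assms by (intro mult_right_mono) auto
  moreover have "pc * c \<le> (pa + pb + pc + 1) * c" using assms by (intro mult_right_mono) auto
  ultimately show ?thesis using assms(7) by (simp add: algebra_simps)
qed

lemma fsub_lsub:
  assumes "v \<in> fsubdiff \<phi> x" shows "v \<in> lsubdiff \<phi> x"
proof -
  have fin: "\<bar>\<phi> x\<bar> \<noteq> \<infinity>" using assms unfolding fsubdiff_def by (auto split: if_splits)
  have "(\<lambda>_. x) \<longlonglongrightarrow> x \<and> (\<lambda>k. \<phi> x) \<longlonglongrightarrow> \<phi> x \<and> (\<forall>k. v \<in> fsubdiff \<phi> x) \<and> (\<lambda>_. v) \<longlonglongrightarrow> v"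
    using assms by simp
  hence "\<exists>ws vs. ws \<longlonglongrightarrow> x \<and> (\<lambda>k. \<phi> (ws k)) \<longlonglongrightarrow> \<phi> x \<and> (\<forall>k. vs k \<in> fsubdiff \<phi> (ws k)) \<and> vs \<longlonglongrightarrow> v"
    by (intro exI[of _ "\<lambda>_. x"] exI[of _ "\<lambda>_. v"]) simp
  thus ?thesis unfolding lsubdiff_def using fin by simp
qed

lemma dist0_le: "v \<in> C \<Longrightarrow> dist0 C \<le> ereal (norm v)"
  unfolding dist0_def using infdist_le[of v C 0] by auto

lemma fenchel_young_sub:
  assumes "y \<in> csubdiff f c"
  obtains fc where "f c = ereal fc" "fconj f y = ereal (inner c y - fc)"
    "\<And>y'. fconj f y' \<ge> ereal (inner c y - fc) + ereal (inner c (y' - y))"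
proof -
  have fin: "\<bar>f c\<bar> \<noteq> \<infinity>" using assms unfolding csubdiff_def by (auto split: if_splits)
  then obtain fc where fc: "f c = ereal fc" by (cases "f c") auto
  have sub: "\<forall>w. f w \<ge> f c + ereal (inner y (w - c))" using assms fin unfolding csubdiff_def by auto
  have le: "fconj f y \<le> ereal (inner c y - fc)"
  proof (rule fconj_le)
    fix w
    have "f w \<ge> ereal (fc + inner y (w - c))" using sub fc by (metis plus_ereal.simps(1))
    thus "ereal (inner w y) - f w \<le> ereal (inner c y - fc)"
      by (cases "f w") (auto simp: inner_diff_right inner_commute)
  qed
  have ge: "fconj f y \<ge> ereal (inner c y - fc)" using fconj_ge[of c y f] fc by simp
  have eq: "fconj f y = ereal (inner c y - fc)" using le ge by (rule antisym)
  have "fconj f y' \<ge> ereal (inner c y - fc) + ereal (inner c (y' - y))" for y'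
    using fconj_ge[of c y' f] fc by (simp add: inner_diff_right)
  thus ?thesis using that fc eq by blast
qed

lemma closest_normal:
  fixes S :: "'a::euclidean_space set"
  assumes "closed S" "convex S" "S \<noteq> {}"
  shows "closest_point S p \<in> S" "\<forall>x'\<in>S. inner (p - closest_point S p) (x' - closest_point S p) \<le> 0"
proof -
  show cp: "closest_point S p \<in> S" by (rule closest_point_in_set[OF assms(1,3)])
  show "\<forall>x'\<in>S. inner (p - closest_point S p) (x' - closest_point S p) \<le> 0"
  proof
    fix x' assume "x' \<in> S"
    thus "inner (p - closest_point S p) (x' - closest_point S p) \<le> 0"
      using any_closest_point_dot[OF assms(2,1) cp] closest_point_le[OF assms(1)] by blast
  qed
qed

lemma sq_diff_bound:
  fixes p q :: "'a::real_normed_vector"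
  shows "\<bar>(norm p)\<^sup>2 - (norm q)\<^sup>2\<bar> \<le> norm (p - q) * (norm p + norm q)"
proof -
  have "\<bar>(norm p)\<^sup>2 - (norm q)\<^sup>2\<bar> = \<bar>norm p - norm q\<bar> * (norm p + norm q)"
  proof -
    have "(norm p)\<^sup>2 - (norm q)\<^sup>2 = (norm p - norm q) * (norm p + norm q)" by (simp add: power2_eq_square algebra_simps)
    hence "\<bar>(norm p)\<^sup>2 - (norm q)\<^sup>2\<bar> = \<bar>norm p - norm q\<bar> * \<bar>norm p + norm q\<bar>" by (simp add: abs_mult)
    thus ?thesis by simp
  qed
  also have "\<dots> \<le> norm (p - q) * (norm p + norm q)"
    by (intro mult_right_mono norm_triangle_ineq3) auto
  finally show ?thesis .
qed

theorem theorem6p2: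
  fixes S :: "'n::euclidean_space set"
    and A :: "'n \<Rightarrow> 's::euclidean_space" and K :: "'n \<Rightarrow> 'p::euclidean_space"
    and g :: "'s \<Rightarrow> ereal" and f :: "'p \<Rightarrow> ereal"
    and h :: "'n \<Rightarrow> real" and gradh :: "'n \<Rightarrow> 'n" and L :: real and ell :: real
    and \<beta> \<nu> q \<epsilon> :: real
    and x u :: "nat \<Rightarrow> 'n" and y :: "nat \<Rightarrow> 'p" and z :: "nat \<Rightarrow> 's"
    and \<theta> \<delta>s \<gamma>s :: "nat \<Rightarrow> real" and j :: "nat \<Rightarrow> nat"
    and \<gamma> m M :: real and K0 K1 :: nat
  assumes S: "S \<noteq> {}" "convex S" "compact S"
    and lin: "linear A" "linear K"
    and g: "proper_fun g" "convex_fun g" "lsc_fun g"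
    and h: "\<exists>U. open U \<and> S \<subseteq> U \<and> (\<forall>v\<in>U. (h has_derivative (\<lambda>w. inner (gradh v) w)) (at v))
              \<and> (\<forall>v\<in>U. \<forall>w\<in>U. norm (gradh v - gradh w) \<le> L * norm (v - w))"
    and f: "proper_fun f" "convex_fun f" "lsc_fun f"
    and fdom: "K ` S \<subseteq> interior (edom f)"
    and fpos: "\<forall>v\<in>S. f (K v) > 0"
    and gdom: "S \<inter> A -` edom g \<noteq> {}"
    and infpos: "(INF v\<in>S. g (A v) + ereal (h v)) > 0"
    and gsub: "A ` S \<subseteq> {w. csubdiff g w \<noteq> {}}"
    and ell: "ell > 0" "\<forall>v\<in>S. infdist 0 (csubdiff g (A v)) \<le> ell"
    \<comment> \<open>algorithm parameters\<close>
    and par: "0 < \<beta>" "\<beta> < 2" "\<nu> > 0" "0 < q" "q < 1" "\<delta>s 0 > 0" "\<theta> 0 > 0" "\<gamma>s 0 = 1" "\<epsilon> > 0"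
    \<comment> \<open>algorithm iterations\<close>
    and it_y: "\<forall>k. y (Suc k) \<in> csubdiff f (K (x k))"
    and it_x: "\<forall>k. x (Suc k) = closest_point S (u k + (\<theta> k / \<delta>s k) *\<^sub>R adjoint K (y (Suc k))
                   - (1 / \<delta>s k) *\<^sub>R gradh (x k) - (1 / \<delta>s k) *\<^sub>R adjoint A (z k))"
    and it_u: "\<forall>k. u (Suc k) = (1 - \<beta>) *\<^sub>R u k + \<beta> *\<^sub>R x (Suc k)"
    and it_j: "\<forall>k. Psi S A g h (x (Suc k))
                      (prox (fconj g) (1 / (\<gamma>s k * q ^ j k)) ((1 / (\<gamma>s k * q ^ j k)) *\<^sub>R A (x (Suc k))))
                      (u (Suc k)) (\<delta>s k) (\<gamma>s k * q ^ j k) / f (K (x (Suc k))) > 0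
                 \<and> (\<forall>i < j k. \<not> (Psi S A g h (x (Suc k))
                      (prox (fconj g) (1 / (\<gamma>s k * q ^ i)) ((1 / (\<gamma>s k * q ^ i)) *\<^sub>R A (x (Suc k))))
                      (u (Suc k)) (\<delta>s k) (\<gamma>s k * q ^ i) / f (K (x (Suc k))) > 0))"
    and it_z: "\<forall>k. z (Suc k) = prox (fconj g) (1 / (\<gamma>s k * q ^ j k)) ((1 / (\<gamma>s k * q ^ j k)) *\<^sub>R A (x (Suc k)))"
    and it_theta: "\<forall>k. ereal (\<theta> (Suc k)) =
                   Psi S A g h (x (Suc k)) (z (Suc k)) (u (Suc k)) (\<delta>s k) (\<gamma>s k * q ^ j k) / f (K (x (Suc k)))"
    and it_gamma: "\<forall>k. \<gamma>s (Suc k) =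
                   (if norm (z (Suc k)) > min (\<epsilon> / (\<gamma>s k * q ^ j k)) (sqrt (2 * \<epsilon> / (\<gamma>s k * q ^ j k)))
                    then \<gamma>s k * q ^ j k * q else \<gamma>s k * q ^ j k)"
    and it_delta: "\<forall>k. \<delta>s (Suc k) = 2 * \<nu> + L + 2 * (onorm A)\<^sup>2 / \<gamma>s (Suc k)"
    \<comment> \<open>hypotheses of the theorem\<close>
    and gam: "\<gamma> > 0"
    and stab: "\<forall>k\<ge>K0. \<gamma>s k = \<gamma> \<and> \<delta>s k = 2 * \<nu> + L + 2 * (onorm A)\<^sup>2 / \<gamma>
                   \<and> norm (z (Suc k)) \<le> min (\<epsilon> / \<gamma>) (sqrt (2 * \<epsilon> / \<gamma>))"
    and mM: "0 < m" "m \<le> M" "\<forall>k\<ge>1. ereal m < f (K (x k)) \<and> f (K (x k)) \<le> ereal M"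
    and K1: "K1 \<ge> K0 + 1"
    and K1b: "\<forall>k\<ge>K1. ereal m \<le> ereal (inner (K (x k)) (y k)) - fconj f (y k)
                  \<and> ereal (inner (K (x k)) (y k)) - fconj f (y k) \<le> f (K (x k))
                  \<and> f (K (x k)) \<le> ereal M"
    and calm: "\<forall>w\<in>edom (fconj f). calm_at (fconj f) w"
    and esc: "ess_strictly_convex g"
  shows "\<exists>\<zeta>>0. \<forall>k\<ge>K1.
           dist0 (lsubdiff (Gamma S A K g f h (2 * \<nu> + L + 2 * (onorm A)\<^sup>2 / \<gamma>) \<gamma> m)
                      (x (Suc k), y (Suc k), z (Suc k), u (Suc k)))
           \<le> ereal (\<zeta> * (norm (x k - x (Suc k)) + norm (u k - u (Suc k)) + norm (z k - z (Suc k))))"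
proof -
  define \<delta> where "\<delta> = 2 * \<nu> + L + 2 * (onorm A)\<^sup>2 / \<gamma>"
  obtain U where U: "open U" "S \<subseteq> U" and hder: "\<forall>v\<in>U. (h has_derivative (\<lambda>w. inner (gradh v) w)) (at v)"
    and hlip: "\<forall>v\<in>U. \<forall>w\<in>U. norm (gradh v - gradh w) \<le> L * norm (v - w)"
    using h by blast
  obtain s0 where s0: "s0 \<in> S" using S(1) by blast
  have L0: "L \<ge> 0"
  proof -
    obtain r where r: "r > 0" "ball s0 r \<subseteq> U" using U s0 open_contains_ball by blast
    obtain b :: 'n where b: "b \<in> Basis" using nonempty_Basis by blast
    define w where "w = s0 + (r / 2) *\<^sub>R b"
    have nb: "norm (w - s0) = r / 2" unfolding w_def using b r by simp
    hence "w \<in> U" using r by (auto simp: dist_norm norm_minus_commute)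
    hence "0 \<le> L * (r / 2)" using hlip s0 U(2) nb by (metis norm_ge_zero order_trans subsetD)
    thus ?thesis using r by (simp add: zero_le_mult_iff)
  qed
  have dpos: "\<delta> > 0" unfolding \<delta>_def using par(3) L0 gam by (simp add: add_pos_nonneg)
  have stabk: "\<gamma>s k = \<gamma>" "\<delta>s k = \<delta>" if "k \<ge> K0" for k using stab that unfolding \<delta>_def by auto
  have gq: "\<gamma>s k * q ^ j k = \<gamma>" if "k \<ge> K0" for k
  proof -
    have g1: "\<gamma>s (Suc k) = \<gamma>" "\<gamma>s k = \<gamma>" using stabk that by auto
    have qj: "q ^ j k \<le> 1" using par(4,5) by (simp add: power_le_one)
    show ?thesis
    proof (cases "norm (z (Suc k)) > min (\<epsilon> / (\<gamma>s k * q ^ j k)) (sqrt (2 * \<epsilon> / (\<gamma>s k * q ^ j k)))")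
      case True
      hence "\<gamma> = \<gamma> * q ^ j k * q" using it_gamma g1 by simp
      hence "q ^ j k * q = 1" using gam by (simp add: mult.assoc)
      moreover have "q ^ j k * q \<le> 1 * q" using qj par(4) by (intro mult_right_mono) auto
      hence "q ^ j k * q < 1" using par(5) by simp
      ultimately show ?thesis by simp
    next
      case False
      thus ?thesis using it_gamma g1 by simp
    qed
  qed
  have xS: "x (Suc k) \<in> S" for k
    using it_x closest_normal(1)[OF compact_imp_closed[OF S(3)] S(2) S(1)] by simp
  have ereal_div_minf: "-\<infinity> / ereal b = -\<infinity>" if "b > 0" for b :: real
    unfolding divide_ereal_def using that by simp
  have fKx: "\<exists>fK. f (K (x k)) = ereal fK \<and> m < fK \<and> fK \<le> M" if "k \<ge> 1" for k
  proof -
    have "ereal m < f (K (x k))" "f (K (x k)) \<le> ereal M" using mM(3) that by auto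
    thus ?thesis by (cases "f (K (x k))") auto
  qed
  have zfacts: "\<exists>G. fconj g (z (Suc k)) = ereal G \<and>
      (\<forall>w. fconj g w \<ge> ereal G + ereal (inner (A (x (Suc k)) - \<gamma> *\<^sub>R z (Suc k)) (w - z (Suc k))))"
    if kK: "k \<ge> K0" for k
  proof -
    obtain fK where fK: "f (K (x (Suc k))) = ereal fK" "m < fK" using fKx[of "Suc k"] by auto
    have fKp: "fK > 0" using fK mM(1) by simp
    have zdef: "z (Suc k) = prox (fconj g) (1 / \<gamma>) ((1 / \<gamma>) *\<^sub>R A (x (Suc k)))"
      using it_z gq[OF kK] by simp
    have "Psi S A g h (x (Suc k)) (prox (fconj g) (1 / (\<gamma>s k * q ^ j k)) ((1 / (\<gamma>s k * q ^ j k)) *\<^sub>R A (x (Suc k))))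
       (u (Suc k)) (\<delta>s k) (\<gamma>s k * q ^ j k) / f (K (x (Suc k))) > 0" using it_j by blast
    hence pos: "Psi S A g h (x (Suc k)) (z (Suc k)) (u (Suc k)) (\<delta>s k) \<gamma> / f (K (x (Suc k))) > 0"
      unfolding gq[OF kK] zdef[symmetric] .
    have fin: "fconj g (z (Suc k)) < \<infinity>"
    proof (rule ccontr)
      assume "\<not> ?thesis"
      hence "fconj g (z (Suc k)) = \<infinity>" by (simp add: top.not_eq_extremum)
      hence "Psi S A g h (x (Suc k)) (z (Suc k)) (u (Suc k)) (\<delta>s k) \<gamma> = -\<infinity>"
        using xS[of k] unfolding Psi_def by simp
      thus False using pos fK ereal_div_minf[OF fKp] by simp
    qed
    have fin': "fconj g (prox (fconj g) (1 / \<gamma>) ((1 / \<gamma>) *\<^sub>R A (x (Suc k)))) < \<infinity>" using fin zdef by simp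
    note pc = prox_char[OF g(1), of "1 / \<gamma>", OF _ fin']
    have eqv: "(1 / (1 / \<gamma>)) *\<^sub>R ((1 / \<gamma>) *\<^sub>R A (x (Suc k)) - z (Suc k)) = A (x (Suc k)) - \<gamma> *\<^sub>R z (Suc k)"
      using gam by (simp add: scaleR_diff_right)
    show ?thesis using pc gam unfolding zdef[symmetric] eqv by (intro exI[of _ "real_of_ereal (fconj g (z (Suc k)))"]) auto
  qed
  have yfacts: "\<exists>fc. f (K (x k)) = ereal fc \<and> fconj f (y (Suc k)) = ereal (inner (K (x k)) (y (Suc k)) - fc) \<and>
      (\<forall>y'. fconj f y' \<ge> ereal (inner (K (x k)) (y (Suc k)) - fc) + ereal (inner (K (x k)) (y' - y (Suc k))))" for k
  proof -
    obtain fc where "f (K (x k)) = ereal fc" "fconj f (y (Suc k)) = ereal (inner (K (x k)) (y (Suc k)) - fc)"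
      "\<And>y'. fconj f y' \<ge> ereal (inner (K (x k)) (y (Suc k)) - fc) + ereal (inner (K (x k)) (y' - y (Suc k)))"
      using fenchel_young_sub[OF it_y[rule_format, of k]] by blast
    thus ?thesis by blast
  qed
  obtain RS where RS: "\<forall>v\<in>S. norm v \<le> RS" using compact_imp_bounded[OF S(3)] unfolding bounded_iff by blast
  have RS0: "RS \<ge> 0" using RS s0 by (meson norm_ge_zero order_trans)
  define cb where "cb = \<bar>1 - \<beta>\<bar>"
  have cb: "cb \<ge> 0" "cb < 1" unfolding cb_def using par(1,2) by auto
  define Bu where "Bu = max (norm (u 0)) (\<beta> * RS / (1 - cb))"
  have Bu: "norm (u k) \<le> Bu" for k
  proof (induction k)
    case 0 thus ?case unfolding Bu_def by simp
  next
    case (Suc k)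
    have "norm (u (Suc k)) \<le> norm ((1 - \<beta>) *\<^sub>R u k) + norm (\<beta> *\<^sub>R x (Suc k))"
      using it_u norm_triangle_ineq[of "(1 - \<beta>) *\<^sub>R u k" "\<beta> *\<^sub>R x (Suc k)"] by simp
    also have "\<dots> = cb * norm (u k) + \<beta> * norm (x (Suc k))" unfolding cb_def using par(1) by simp
    also have "\<dots> \<le> cb * Bu + \<beta> * RS"
      using Suc cb RS xS[of k] par(1) by (intro add_mono mult_left_mono) auto
    also have "\<dots> \<le> Bu"
    proof -
      have "\<beta> * RS / (1 - cb) \<le> Bu" unfolding Bu_def by simp
      hence "\<beta> * RS \<le> (1 - cb) * Bu" using cb by (simp add: pos_divide_le_eq mult.commute)
      thus ?thesis by (simp add: algebra_simps)
    qed
    finally show ?case .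
  qed
  have Bu0: "Bu \<ge> 0" using Bu[of 0] norm_ge_zero[of "u 0"] by linarith
  define Bz where "Bz = \<epsilon> / \<gamma>"
  have Bz: "norm (z (Suc k)) \<le> Bz" if "k \<ge> K0" for k using stab that unfolding Bz_def by auto
  have Bz0: "Bz \<ge> 0" unfolding Bz_def using par(9) gam by simp
  have cKS: "compact (K ` S)"
    by (rule compact_continuous_image[OF linear_continuous_on[OF linear_conv_bounded_linear[THEN iffD1, OF lin(2)]] S(3)])
  have "\<exists>B. B > 0 \<and> (\<forall>c\<in>K ` S. \<forall>yy\<in>csubdiff f c. norm yy \<le> B)"
    using subgrad_bounded[OF f(1) f(2) cKS fdom] by simp
  then obtain By where By': "By > 0 \<and> (\<forall>c\<in>K ` S. \<forall>yy\<in>csubdiff f c. norm yy \<le> By)" by (rule exE)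
  have By: "By > 0" "\<forall>c\<in>K ` S. \<forall>yy\<in>csubdiff f c. norm yy \<le> By" using By' by auto
  have Byk: "norm (y (Suc k)) \<le> By" if "k \<ge> 1" for k
  proof -
    define k' where "k' = k - 1"
    have k': "k = Suc k'" using that unfolding k'_def by simp
    have "K (x k) \<in> K ` S" using xS[of k'] k' by simp
    moreover have "y (Suc k) \<in> csubdiff f (K (x k))" using it_y by blast
    ultimately show ?thesis using By(2) by (meson bspec)
  qed
  obtain BA where BA: "BA > 0" "\<And>v. norm (A v) \<le> BA * norm v" using linear_bounded_pos[OF lin(1)] by blast
  obtain BK where BK: "BK > 0" "\<And>v. norm (K v) \<le> BK * norm v" using linear_bounded_pos[OF lin(2)] by blast
  obtain BAa where BAa: "BAa > 0" "\<And>v. norm (adjoint A v) \<le> BAa * norm v" using linear_bounded_pos[OF adjoint_linear[OF lin(1)]] by blast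
  obtain BKa where BKa: "BKa > 0" "\<And>v. norm (adjoint K v) \<le> BKa * norm v" using linear_bounded_pos[OF adjoint_linear[OF lin(2)]] by blast
  define Bg where "Bg = norm (gradh s0) + L * (2 * RS)"
  have Bg: "norm (gradh v) \<le> Bg" if "v \<in> S" for v
  proof -
    have 1: "norm (gradh v) \<le> norm (gradh s0) + norm (gradh v - gradh s0)" by (rule norm_triangle_sub)
    have vU: "v \<in> U" "s0 \<in> U" using U(2) that s0 by auto
    have 2: "norm (gradh v - gradh s0) \<le> L * norm (v - s0)" by (rule hlip[rule_format, OF vU])
    have "norm (v - s0) \<le> 2 * RS" using RS[rule_format, OF that] RS[rule_format, OF s0] norm_triangle_ineq4[of v s0] by linarith
    hence 3: "L * norm (v - s0) \<le> L * (2 * RS)" using L0 by (simp add: mult_left_mono)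
    show ?thesis unfolding Bg_def using 1 2 3 by linarith
  qed
  have Bg0: "Bg \<ge> 0" unfolding Bg_def using L0 RS0 by simp
  have hL: "\<bar>h a - h b\<bar> \<le> Bg * norm (a - b)" if "a \<in> S" "b \<in> S" for a b
  proof -
    have "norm (h a - h b) \<le> Bg * norm (a - b)"
    proof (rule differentiable_bound[OF S(2) _ _ that])
      show "(h has_derivative (\<lambda>w. inner (gradh v) w)) (at v within S)" if "v \<in> S" for v
      proof -
        have "v \<in> U" by (rule subsetD[OF U(2) that])
        thus ?thesis by (rule has_derivative_at_withinI[OF hder[rule_format]])
      qed
      show "onorm (\<lambda>w. inner (gradh v) w) \<le> Bg" if "v \<in> S" for v
      proof (rule onorm_le)
        fix w
        have "norm (inner (gradh v) w) \<le> norm (gradh v) * norm w" using Cauchy_Schwarz_ineq2 by simp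
        also have "\<dots> \<le> Bg * norm w" using Bg[OF that] by (simp add: mult_right_mono)
        finally show "norm (inner (gradh v) w) \<le> Bg * norm w" .
      qed
    qed
    thus ?thesis by simp
  qed
  define Bh where "Bh = \<bar>h s0\<bar> + Bg * (2 * RS)"
  have Bh: "\<bar>h v\<bar> \<le> Bh" if "v \<in> S" for v
  proof -
    have 1: "\<bar>h v - h s0\<bar> \<le> Bg * norm (v - s0)" using hL that s0 by blast
    have "norm (v - s0) \<le> 2 * RS" using RS[rule_format, OF that] RS[rule_format, OF s0] norm_triangle_ineq4[of v s0] by linarith
    hence 2: "Bg * norm (v - s0) \<le> Bg * (2 * RS)" using Bg0 by (simp add: mult_left_mono)
    show ?thesis unfolding Bh_def using 1 2 by linarith
  qed
  obtain a0 where a0: "g a0 < \<infinity>" using g(1) unfolding proper_fun_def by blast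
  define g0 where "g0 = real_of_ereal (g a0)"
  have ga0: "g a0 = ereal g0" using proper_finite[OF g(1) a0] g0_def by simp
  have Glow: "G \<ge> inner a0 zz - g0" if "fconj g zz = ereal G" for zz G
    using fconj_ge[of a0 zz g] that ga0 by simp
  define B\<psi> where "B\<psi> = Bz * BA * RS + Bh + \<delta> / 2 * (RS + Bu)\<^sup>2 + \<bar>g0\<bar> + norm a0 * Bz"
  define W where "W = BKa * By"
  define kA where "kA = Bz * BA + Bg + \<delta> * (RS + Bu)"
  define kB where "kB = \<delta> * (RS + Bu)"
  define kC where "kC = 2 * (BA * RS + \<gamma> * Bz)"
  define pa where "pa = L + W * kA / m + W * B\<psi> * BK * By / (m * m) + B\<psi> * BK / m"
  define pb where "pb = \<delta> + W * kB / m + \<delta> * cb / \<beta>"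
  define pc where "pc = BAa + W * kC / m"
  define \<zeta> where "\<zeta> = pa / m + pb / m + pc / m + 1"
  have Bh0: "Bh \<ge> 0" using Bh[OF s0] by linarith
  have B\<psi>0: "B\<psi> \<ge> 0" unfolding B\<psi>_def using Bz0 BA RS0 Bh0 dpos by simp
  have W0: "W \<ge> 0" unfolding W_def using BKa By by simp
  have k0: "kA \<ge> 0" "kB \<ge> 0" "kC \<ge> 0" unfolding kA_def kB_def kC_def using Bz0 BA Bg0 dpos RS0 Bu0 gam by auto
  have p0: "pa \<ge> 0" "pb \<ge> 0" "pc \<ge> 0" unfolding pa_def pb_def pc_def
    using L0 W0 k0 B\<psi>0 BK By mM(1) dpos cb par(1) BAa by auto
  have \<zeta>0: "\<zeta> > 0"
  proof -
    have "pa / m \<ge> 0" "pb / m \<ge> 0" "pc / m \<ge> 0" using p0 mM(1) by auto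
    thus ?thesis unfolding \<zeta>_def by linarith
  qed
  have main: "dist0 (lsubdiff (Gamma S A K g f h (2 * \<nu> + L + 2 * (onorm A)\<^sup>2 / \<gamma>) \<gamma> m)
                      (x (Suc k), y (Suc k), z (Suc k), u (Suc k)))
           \<le> ereal (\<zeta> * (norm (x k - x (Suc k)) + norm (u k - u (Suc k)) + norm (z k - z (Suc k))))"
    if kK1: "k \<ge> K1" for k
  proof -
    define k' where "k' = k - 1"
    have kk: "k = Suc k'" "k' \<ge> K0" "k \<ge> K0" "k \<ge> 1" using kK1 K1 unfolding k'_def by auto
    define x0 where "x0 = x k"
    define x1 where "x1 = x (Suc k)"
    define y1 where "y1 = y (Suc k)"
    define z0 where "z0 = z k"
    define z1 where "z1 = z (Suc k)"
    define u0 where "u0 = u k"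
    define u1 where "u1 = u (Suc k)"
    have x0S: "x0 \<in> S" unfolding x0_def using xS[of k'] kk by simp
    have x1S: "x1 \<in> S" unfolding x1_def using xS[of k] .
    have nx0: "norm x0 \<le> RS" "norm x1 \<le> RS" using RS x0S x1S by auto
    have nu: "norm u0 \<le> Bu" "norm u1 \<le> Bu" unfolding u0_def u1_def using Bu by auto
    have nz: "norm z0 \<le> Bz" "norm z1 \<le> Bz" unfolding z0_def z1_def using Bz[of k'] Bz[of k] kk by auto
    have ny: "norm y1 \<le> By" unfolding y1_def using Byk kk by simp
    obtain G1 where G1: "fconj g z1 = ereal G1"
      and gsub1: "\<forall>w. fconj g w \<ge> ereal G1 + ereal (inner (A x1 - \<gamma> *\<^sub>R z1) (w - z1))"
      using zfacts[OF kk(3)] unfolding x1_def z1_def by blast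
    obtain G0 where G0: "fconj g z0 = ereal G0"
      and gsub0: "\<forall>w. fconj g w \<ge> ereal G0 + ereal (inner (A x0 - \<gamma> *\<^sub>R z0) (w - z0))"
      using zfacts[OF kk(2)] unfolding x0_def z0_def kk(1) by blast
    obtain fc0 where fc0: "f (K x0) = ereal fc0" and F1: "fconj f y1 = ereal (inner (K x0) y1 - fc0)"
      and fsub: "\<forall>y'. fconj f y' \<ge> ereal (inner (K x0) y1 - fc0) + ereal (inner (K x0) (y' - y1))"
      using yfacts[of k] unfolding x0_def y1_def by blast
    define F where "F = inner (K x0) y1 - fc0"
    have fc0m: "fc0 > m" using fKx[OF kk(4)] fc0 unfolding x0_def by auto
    define D1 where "D1 = inner (K x1) y1 - F"
    have D1m: "D1 \<ge> m"
    proof -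
      have "ereal m \<le> ereal (inner (K x1) y1) - fconj f y1" using K1b kK1 unfolding x1_def y1_def by auto
      thus ?thesis using F1 unfolding D1_def F_def by simp
    qed
    have m0: "m > 0" using mM(1) .
    define \<psi>1 where "\<psi>1 = inner z1 (A x1) + h x1 + \<delta> / 2 * (norm (x1 - u1))\<^sup>2 - \<gamma> / 2 * (norm z1)\<^sup>2 - G1"
    define \<psi>0 where "\<psi>0 = inner z0 (A x0) + h x0 + \<delta> / 2 * (norm (x0 - u0))\<^sup>2 - \<gamma> / 2 * (norm z0)\<^sup>2 - G0"
    have Psi1: "Psi S A g h x1 z1 u1 \<delta> \<gamma> = ereal \<psi>1" using x1S G1 unfolding Psi_def \<psi>1_def by simp
    have Psi0: "Psi S A g h x0 z0 u0 \<delta> \<gamma> = ereal \<psi>0" using x0S G0 unfolding Psi_def \<psi>0_def by simp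
    have psi1: "\<psi>1 > 0"
    proof -
      obtain fK1 where fK1: "f (K x1) = ereal fK1" "m < fK1" using fKx[of "Suc k"] unfolding x1_def by auto
      have "Psi S A g h (x (Suc k)) (prox (fconj g) (1 / (\<gamma>s k * q ^ j k)) ((1 / (\<gamma>s k * q ^ j k)) *\<^sub>R A (x (Suc k))))
         (u (Suc k)) (\<delta>s k) (\<gamma>s k * q ^ j k) / f (K (x (Suc k))) > 0" using it_j by blast
      moreover have "prox (fconj g) (1 / (\<gamma>s k * q ^ j k)) ((1 / (\<gamma>s k * q ^ j k)) *\<^sub>R A (x (Suc k))) = z1"
        unfolding z1_def using it_z by simp
      ultimately have "Psi S A g h x1 z1 u1 \<delta> \<gamma> / f (K x1) > 0"
        unfolding gq[OF kk(3)] stabk(2)[OF kk(3)] x1_def u1_def by simp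
      hence "ereal \<psi>1 / ereal fK1 > 0" using Psi1 fK1 by simp
      hence "\<psi>1 / fK1 > 0" using fK1 m0 by (simp add: ereal_div)
      thus ?thesis using fK1 m0 by (simp add: zero_less_divide_iff)
    qed
    have theta_k: "\<theta> k = \<psi>0 / fc0"
    proof -
      have "ereal (\<theta> (Suc k')) = Psi S A g h (x (Suc k')) (z (Suc k')) (u (Suc k')) (\<delta>s k') (\<gamma>s k' * q ^ j k') / f (K (x (Suc k')))"
        using it_theta by blast
      hence "ereal (\<theta> k) = Psi S A g h x0 z0 u0 \<delta> \<gamma> / f (K x0)"
        unfolding gq[OF kk(2)] stabk(2)[OF kk(2)] x0_def z0_def u0_def kk(1)[symmetric] .
      hence "ereal (\<theta> k) = ereal (\<psi>0 / fc0)" using Psi0 fc0 fc0m m0 by (simp add: ereal_div)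
      thus ?thesis by simp
    qed
    define p where "p = u0 + (\<theta> k / \<delta>) *\<^sub>R adjoint K y1 - (1 / \<delta>) *\<^sub>R gradh x0 - (1 / \<delta>) *\<^sub>R adjoint A z0"
    have x1p: "x1 = closest_point S p"
      unfolding x1_def p_def u0_def y1_def x0_def z0_def using it_x stabk(2)[OF kk(3)] by simp
    define N where "N = \<delta> *\<^sub>R (p - x1)"
    have Nn: "\<forall>x'\<in>S. inner N (x' - x1) \<le> 0"
    proof
      fix x' assume "x' \<in> S"
      hence "inner (p - x1) (x' - x1) \<le> 0"
        using closest_normal(2)[OF compact_imp_closed[OF S(3)] S(2) S(1), of p] x1p by blast
      thus "inner N (x' - x1) \<le> 0" unfolding N_def using dpos by (simp add: mult_nonneg_nonpos)
    qed
    have hd: "(h has_derivative (\<lambda>w. inner (gradh x1) w)) (at x1)"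
      using hder subsetD[OF U(2) x1S] by blast
    have Dm: "inner (K x1) y1 - F > m / 2" using D1m m0 unfolding D1_def by simp
    have fsub': "\<forall>y'. fconj f y' \<ge> ereal F + ereal (inner (K x0) (y' - y1))" using fsub unfolding F_def .
    have F1': "fconj f y1 = ereal F" using F1 unfolding F_def .
    have psi1': "inner z1 (A x1) + h x1 + \<delta> / 2 * (norm (x1 - u1))\<^sup>2 - \<gamma> / 2 * (norm z1)\<^sup>2 - G1 > 0"
      using psi1 unfolding \<psi>1_def .
    define \<theta>' where "\<theta>' = \<psi>1 / D1"
    define Vx where "Vx = adjoint A z1 + gradh x1 + \<delta> *\<^sub>R (x1 - u1) + N - \<theta>' *\<^sub>R adjoint K y1"
    define Vy where "Vy = - \<theta>' *\<^sub>R (K x1 - K x0)"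
    define Vu where "Vu = - \<delta> *\<^sub>R (x1 - u1)"
    have Vmem: "(1 / D1) *\<^sub>R (Vx, Vy, 0::'s, Vu) \<in> fsubdiff (Gamma S A K g f h \<delta> \<gamma> m) (x1, y1, z1, u1)"
      using gamma_frechet[where N=N and h=h and gradh=gradh and ?F1.0=F and ?x0.0=x0 and ?y1.0=y1 and f=f and ?G1.0=G1
          and ?z1.0=z1 and \<gamma>=\<gamma> and m=m and \<delta>=\<delta> and ?u1.0=u1 and ?x1.0=x1 and S=S and A=A and K=K and g=g,
          OF lin g(1) g(2) g(3) esc x1S Nn hd F1' fsub' G1 gsub1 Dm m0 psi1']
      unfolding Vx_def Vy_def Vu_def \<theta>'_def \<psi>1_def D1_def .
    have dist_le: "dist0 (lsubdiff (Gamma S A K g f h \<delta> \<gamma> m) (x1, y1, z1, u1)) \<le> ereal (norm ((1 / D1) *\<^sub>R (Vx, Vy, 0::'s, Vu)))"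
      by (rule dist0_le[OF fsub_lsub[OF Vmem]])
    define a where "a = norm (x0 - x1)"
    define b where "b = norm (u0 - u1)"
    define c where "c = norm (z0 - z1)"
    have abc: "a \<ge> 0" "b \<ge> 0" "c \<ge> 0" unfolding a_def b_def c_def by auto
    have nrm: "norm ((1 / D1) *\<^sub>R (Vx, Vy, 0::'s, Vu)) \<le> (pa / m) * a + (pb / m) * b + (pc / m) * c"
    proof -
      have D1p: "D1 > 0" using D1m m0 by simp
      have absc: "\<bar>cc * X\<bar> \<le> cc * B" if "cc \<ge> 0" "\<bar>X\<bar> \<le> B" for cc X B :: real
        using that by (simp add: abs_mult mult_left_mono)
      have cs: "\<bar>inner v w\<bar> \<le> norm v * norm w" for v w :: 's by (rule Cauchy_Schwarz_ineq2)
      have Ax1: "norm (A x1) \<le> BA * RS" "norm (A x0) \<le> BA * RS"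
        using BA(2)[of x1] BA(2)[of x0] mult_left_mono[OF nx0(2) less_imp_le[OF BA(1)]] mult_left_mono[OF nx0(1) less_imp_le[OF BA(1)]] by auto
      have psi1B: "\<psi>1 \<le> B\<psi>"
      proof -
        have 1: "inner z1 (A x1) \<le> Bz * BA * RS"
        proof -
          have "inner z1 (A x1) \<le> norm z1 * norm (A x1)" using cs[of z1 "A x1"] by linarith
          also have "\<dots> \<le> Bz * (BA * RS)" using nz(2) Ax1(1) by (intro mult_mono) (use Bz0 in auto)
          finally show ?thesis by (simp add: mult.assoc)
        qed
        have 2: "h x1 \<le> Bh" using Bh[OF x1S] by linarith
        have "norm (x1 - u1) \<le> RS + Bu" using norm_triangle_ineq4[of x1 u1] nx0(2) nu(2) by linarith
        hence "(norm (x1 - u1))\<^sup>2 \<le> (RS + Bu)\<^sup>2" by (intro power_mono) auto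
        hence 3: "\<delta> / 2 * (norm (x1 - u1))\<^sup>2 \<le> \<delta> / 2 * (RS + Bu)\<^sup>2" using dpos by (intro mult_left_mono) auto
        have 4: "\<gamma> / 2 * (norm z1)\<^sup>2 \<ge> 0" using gam by simp
        have "G1 \<ge> inner a0 z1 - g0" by (rule Glow[OF G1])
        moreover have "inner a0 z1 \<ge> - (norm a0 * Bz)"
        proof -
          have "\<bar>inner a0 z1\<bar> \<le> norm a0 * norm z1" by (rule Cauchy_Schwarz_ineq2)
          also have "\<dots> \<le> norm a0 * Bz" using nz(2) by (intro mult_left_mono) auto
          finally show ?thesis by linarith
        qed
        ultimately have 5: "- G1 \<le> \<bar>g0\<bar> + norm a0 * Bz" by linarith
        show ?thesis unfolding \<psi>1_def B\<psi>_def using 1 2 3 4 5 by linarith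
      qed
      have t1: "\<bar>inner z0 (A x0) - inner z1 (A x1)\<bar> \<le> BA * RS * c + Bz * BA * a"
      proof -
        have eq: "inner z0 (A x0) - inner z1 (A x1) = inner (z0 - z1) (A x0) + inner z1 (A (x0 - x1))"
          using linear_diff[OF lin(1), of x0 x1] by (simp add: inner_diff_left inner_diff_right)
        have "\<bar>inner (z0 - z1) (A x0)\<bar> \<le> c * (BA * RS)"
          using cs[of "z0 - z1" "A x0"] Ax1(2) unfolding c_def
          by (meson mult_left_mono norm_ge_zero order_trans)
        moreover have "\<bar>inner z1 (A (x0 - x1))\<bar> \<le> Bz * (BA * a)"
        proof -
          have "\<bar>inner z1 (A (x0 - x1))\<bar> \<le> norm z1 * norm (A (x0 - x1))" by (rule cs)
          also have "\<dots> \<le> Bz * (BA * a)" using nz(2) BA(2)[of "x0 - x1"] Bz0 unfolding a_def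
            by (intro mult_mono) auto
          finally show ?thesis .
        qed
        ultimately show ?thesis unfolding eq by (simp add: algebra_simps)
      qed
      have t2: "\<bar>h x0 - h x1\<bar> \<le> Bg * a" unfolding a_def by (rule hL[OF x0S x1S])
      have t3: "\<bar>(norm (x0 - u0))\<^sup>2 - (norm (x1 - u1))\<^sup>2\<bar> \<le> (2 * (RS + Bu)) * (a + b)"
      proof -
        have "\<bar>(norm (x0 - u0))\<^sup>2 - (norm (x1 - u1))\<^sup>2\<bar> \<le> norm ((x0 - u0) - (x1 - u1)) * (norm (x0 - u0) + norm (x1 - u1))"
          by (rule sq_diff_bound)
        also have "\<dots> \<le> (a + b) * (2 * (RS + Bu))"
        proof (rule mult_mono)
          have "(x0 - u0) - (x1 - u1) = (x0 - x1) - (u0 - u1)" by simp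
          thus "norm ((x0 - u0) - (x1 - u1)) \<le> a + b" unfolding a_def b_def by (metis norm_triangle_ineq4)
          show "norm (x0 - u0) + norm (x1 - u1) \<le> 2 * (RS + Bu)"
            using norm_triangle_ineq4[of x0 u0] norm_triangle_ineq4[of x1 u1] nx0 nu unfolding distrib_left by linarith
        qed (use abc in auto)
        finally show ?thesis by (simp add: mult.commute)
      qed
      have t4: "\<bar>(norm z0)\<^sup>2 - (norm z1)\<^sup>2\<bar> \<le> (2 * Bz) * c"
      proof -
        have "\<bar>(norm z0)\<^sup>2 - (norm z1)\<^sup>2\<bar> \<le> norm (z0 - z1) * (norm z0 + norm z1)" by (rule sq_diff_bound)
        also have "\<dots> \<le> c * (2 * Bz)" unfolding c_def using nz by (intro mult_left_mono) auto
        finally show ?thesis by (simp add: mult.commute)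
      qed
      have t5: "\<bar>G0 - G1\<bar> \<le> (BA * RS + \<gamma> * Bz) * c"
      proof -
        have n1: "norm (A x1 - \<gamma> *\<^sub>R z1) \<le> BA * RS + \<gamma> * Bz"
          using norm_triangle_ineq4[of "A x1" "\<gamma> *\<^sub>R z1"] Ax1(1) mult_left_mono[OF nz(2) less_imp_le[OF gam]] abs_of_pos[OF gam] by (simp del: norm_scaleR add: norm_scaleR[of \<gamma>])
        have n0: "norm (A x0 - \<gamma> *\<^sub>R z0) \<le> BA * RS + \<gamma> * Bz"
          using norm_triangle_ineq4[of "A x0" "\<gamma> *\<^sub>R z0"] Ax1(2) mult_left_mono[OF nz(1) less_imp_le[OF gam]] abs_of_pos[OF gam] by (simp del: norm_scaleR add: norm_scaleR[of \<gamma>])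
        have "fconj g z0 \<ge> ereal G1 + ereal (inner (A x1 - \<gamma> *\<^sub>R z1) (z0 - z1))" using gsub1 by blast
        hence g01: "G0 \<ge> G1 + inner (A x1 - \<gamma> *\<^sub>R z1) (z0 - z1)" using G0 by simp
        have "fconj g z1 \<ge> ereal G0 + ereal (inner (A x0 - \<gamma> *\<^sub>R z0) (z1 - z0))" using gsub0 by blast
        hence g10: "G1 \<ge> G0 + inner (A x0 - \<gamma> *\<^sub>R z0) (z1 - z0)" using G1 by simp
        have "\<bar>inner (A x1 - \<gamma> *\<^sub>R z1) (z0 - z1)\<bar> \<le> (BA * RS + \<gamma> * Bz) * c"
          using cs[of "A x1 - \<gamma> *\<^sub>R z1" "z0 - z1"] n1 unfolding c_def
          by (meson mult_right_mono norm_ge_zero order_trans)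
        moreover have "\<bar>inner (A x0 - \<gamma> *\<^sub>R z0) (z1 - z0)\<bar> \<le> (BA * RS + \<gamma> * Bz) * c"
          using cs[of "A x0 - \<gamma> *\<^sub>R z0" "z1 - z0"] n0 unfolding c_def norm_minus_commute[of z1 z0]
          by (meson mult_right_mono norm_ge_zero order_trans)
        ultimately show ?thesis using g01 g10 by (simp add: abs_le_iff)
      qed
      have Ppsi: "\<bar>\<psi>0 - \<psi>1\<bar> \<le> kA * a + kB * b + kC * c"
      proof -
        have eq: "\<psi>0 - \<psi>1 = (inner z0 (A x0) - inner z1 (A x1)) + (h x0 - h x1)
            + \<delta> / 2 * ((norm (x0 - u0))\<^sup>2 - (norm (x1 - u1))\<^sup>2) - \<gamma> / 2 * ((norm z0)\<^sup>2 - (norm z1)\<^sup>2) - (G0 - G1)"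
          unfolding \<psi>0_def \<psi>1_def by (simp add: algebra_simps)
        have s3: "\<bar>\<delta> / 2 * ((norm (x0 - u0))\<^sup>2 - (norm (x1 - u1))\<^sup>2)\<bar> \<le> \<delta> / 2 * ((2 * (RS + Bu)) * (a + b))"
          by (rule absc[OF _ t3]) (use dpos in simp)
        have s4: "\<bar>\<gamma> / 2 * ((norm z0)\<^sup>2 - (norm z1)\<^sup>2)\<bar> \<le> \<gamma> / 2 * ((2 * Bz) * c)"
          by (rule absc[OF _ t4]) (use gam in simp)
        have r: "kA * a + kB * b + kC * c = (BA * RS * c + Bz * BA * a) + Bg * a + \<delta> / 2 * ((2 * (RS + Bu)) * (a + b))
             + \<gamma> / 2 * ((2 * Bz) * c) + (BA * RS + \<gamma> * Bz) * c"
          unfolding kA_def kB_def kC_def by (simp add: algebra_simps)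
        show ?thesis unfolding eq r using t1 t2 s3 s4 t5 by (simp add: abs_le_iff)
      qed
      have Dd: "D1 - fc0 = inner (K x1 - K x0) y1" unfolding D1_def F_def by (simp add: inner_diff_left)
      have nKd: "norm (K x1 - K x0) \<le> BK * a"
        using BK(2)[of "x1 - x0"] linear_diff[OF lin(2), of x1 x0] unfolding a_def by (simp add: norm_minus_commute)
      have DdB: "\<bar>D1 - fc0\<bar> \<le> BK * a * By"
      proof -
        have "\<bar>D1 - fc0\<bar> \<le> norm (K x1 - K x0) * norm y1" unfolding Dd by (rule Cauchy_Schwarz_ineq2)
        also have "\<dots> \<le> (BK * a) * By" using nKd ny by (intro mult_mono) (use BK abc in auto)
        finally show ?thesis .
      qed
      have fcp: "fc0 > 0" using fc0m m0 by simp
      define T where "T = \<bar>\<theta> k - \<theta>'\<bar>"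
      have Tb: "T \<le> (kA * a + kB * b + kC * c) / m + B\<psi> * BK * By * a / (m * m)"
      proof -
        have q1: "\<psi>1 * (D1 - fc0) / (fc0 * D1) = \<psi>1 / fc0 - \<psi>1 / D1" using fcp D1p by (simp add: field_simps)
        have q2: "(\<psi>0 - \<psi>1) / fc0 = \<psi>0 / fc0 - \<psi>1 / fc0" by (simp add: diff_divide_distrib)
        have "\<theta> k - \<theta>' = (\<psi>0 - \<psi>1) / fc0 + \<psi>1 * (D1 - fc0) / (fc0 * D1)"
          unfolding theta_k \<theta>'_def q1 q2 by simp
        hence Tle: "T \<le> \<bar>(\<psi>0 - \<psi>1) / fc0\<bar> + \<bar>\<psi>1 * (D1 - fc0) / (fc0 * D1)\<bar>"
          unfolding T_def by (simp only: abs_triangle_ineq)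
        have e1: "\<bar>(\<psi>0 - \<psi>1) / fc0\<bar> = \<bar>\<psi>0 - \<psi>1\<bar> / fc0" using fcp by (simp add: abs_divide)
        have e2: "\<bar>\<psi>1 * (D1 - fc0) / (fc0 * D1)\<bar> = \<psi>1 * \<bar>D1 - fc0\<bar> / (fc0 * D1)"
          using fcp D1p psi1 by (simp add: abs_divide abs_mult)
        have "T \<le> \<bar>\<psi>0 - \<psi>1\<bar> / fc0 + \<psi>1 * \<bar>D1 - fc0\<bar> / (fc0 * D1)" using Tle unfolding e1 e2 .
        also have "\<bar>\<psi>0 - \<psi>1\<bar> / fc0 \<le> (kA * a + kB * b + kC * c) / m"
          by (rule frac_le) (use Ppsi fc0m m0 abc k0 in auto)
        also have "\<psi>1 * \<bar>D1 - fc0\<bar> / (fc0 * D1) \<le> B\<psi> * BK * By * a / (m * m)"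
        proof (rule frac_le)
          show "0 \<le> B\<psi> * BK * By * a" using B\<psi>0 BK By abc by simp
          have "\<psi>1 * \<bar>D1 - fc0\<bar> \<le> B\<psi> * (BK * a * By)" using psi1B DdB psi1 B\<psi>0 by (intro mult_mono) auto
          thus "\<psi>1 * \<bar>D1 - fc0\<bar> \<le> B\<psi> * BK * By * a" by (simp add: algebra_simps)
          show "0 < m * m" using m0 by simp
          show "m * m \<le> fc0 * D1" using fc0m D1m m0 by (intro mult_mono) auto
        qed
        finally show ?thesis by simp
      qed
      have Vxeq: "Vx = adjoint A (z1 - z0) + (gradh x1 - gradh x0) + \<delta> *\<^sub>R (u0 - u1) + (\<theta> k - \<theta>') *\<^sub>R adjoint K y1"
      proof -
        have Neq: "N = \<delta> *\<^sub>R u0 + \<theta> k *\<^sub>R adjoint K y1 - gradh x0 - adjoint A z0 - \<delta> *\<^sub>R x1"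
          unfolding N_def p_def using dpos by (simp add: algebra_simps)
        have adiff: "adjoint A (z1 - z0) = adjoint A z1 - adjoint A z0"
          by (rule linear_diff[OF adjoint_linear[OF lin(1)]])
        show ?thesis unfolding Vx_def Neq adiff by (simp add: algebra_simps)
      qed
      have nVx: "norm Vx \<le> BAa * c + L * a + \<delta> * b + T * W"
      proof -
        have 1: "norm (adjoint A (z1 - z0)) \<le> BAa * c" using BAa(2)[of "z1 - z0"] unfolding c_def by (simp add: norm_minus_commute)
        have 2: "norm (gradh x1 - gradh x0) \<le> L * a"
          using hlip subsetD[OF U(2) x1S] subsetD[OF U(2) x0S] unfolding a_def by (simp add: norm_minus_commute)
        have 3: "norm (\<delta> *\<^sub>R (u0 - u1)) = \<delta> * b" unfolding b_def using dpos by simp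
        have 4: "norm ((\<theta> k - \<theta>') *\<^sub>R adjoint K y1) \<le> T * W"
        proof -
          have "norm (adjoint K y1) \<le> BKa * By" using BKa(2)[of y1] mult_left_mono[OF ny less_imp_le[OF BKa(1)]] by linarith
          thus ?thesis unfolding T_def W_def by (simp add: mult_left_mono)
        qed
        show ?thesis unfolding Vxeq using 1 2 3 4 norm_triangle_ineq
          by (smt (verit, best) norm_triangle_ineq)
      qed
      have nVy: "norm Vy \<le> B\<psi> / m * (BK * a)"
      proof -
        have th: "\<theta>' \<le> B\<psi> / m" unfolding \<theta>'_def by (rule frac_le) (use psi1B D1m m0 psi1 B\<psi>0 in auto)
        have th0: "\<theta>' \<ge> 0" unfolding \<theta>'_def using psi1 D1p by simp
        have "norm Vy = \<theta>' * norm (K x1 - K x0)" unfolding Vy_def using th0 by simp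
        also have "\<dots> \<le> B\<psi> / m * (BK * a)" using th nKd th0 by (intro mult_mono) (use B\<psi>0 m0 in auto)
        finally show ?thesis .
      qed
      have nVu: "norm Vu = \<delta> * cb / \<beta> * b"
      proof -
        have "u1 = (1 - \<beta>) *\<^sub>R u0 + \<beta> *\<^sub>R x1" unfolding u1_def u0_def x1_def using it_u by simp
        hence "\<beta> *\<^sub>R (x1 - u1) = (1 - \<beta>) *\<^sub>R (u1 - u0)" by (simp add: algebra_simps)
        hence "\<beta> * norm (x1 - u1) = cb * b" unfolding cb_def b_def using par(1)
          by (metis abs_of_pos norm_minus_commute norm_scaleR)
        hence "norm (x1 - u1) = cb / \<beta> * b" using par(1) by (simp add: field_simps)
        thus ?thesis unfolding Vu_def using dpos by simp
      qed
      have WT: "T * W \<le> W * kA / m * a + W * kB / m * b + W * kC / m * c + W * B\<psi> * BK * By / (m * m) * a"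
      proof -
        have "T * W \<le> ((kA * a + kB * b + kC * c) / m + B\<psi> * BK * By * a / (m * m)) * W"
          using Tb W0 by (rule mult_right_mono)
        also have "\<dots> = W * kA / m * a + W * kB / m * b + W * kC / m * c + W * B\<psi> * BK * By / (m * m) * a"
          by (simp add: field_simps add_divide_distrib)
        finally show ?thesis .
      qed
      have S1: "norm Vx + norm Vy + norm Vu \<le> pa * a + pb * b + pc * c"
      proof -
        have "pa * a + pb * b + pc * c = L * a + W * kA / m * a + W * B\<psi> * BK * By / (m * m) * a + B\<psi> / m * (BK * a)
            + \<delta> * b + W * kB / m * b + \<delta> * cb / \<beta> * b + BAa * c + W * kC / m * c"
          unfolding pa_def pb_def pc_def by (simp add: algebra_simps)
        thus ?thesis using nVx nVy nVu WT by linarith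
      qed
      have nP: "norm (Vx, Vy, 0::'s, Vu) \<le> norm Vx + norm Vy + norm Vu"
      proof -
        have "norm (Vx, Vy, 0::'s, Vu) \<le> norm Vx + norm (Vy, 0::'s, Vu)" by (rule norm_Pair_le)
        moreover have "norm (Vy, 0::'s, Vu) \<le> norm Vy + norm (0::'s, Vu)" by (rule norm_Pair_le)
        moreover have "norm (0::'s, Vu) \<le> norm (0::'s) + norm Vu" by (rule norm_Pair_le)
        ultimately show ?thesis by simp
      qed
      have "norm ((1 / D1) *\<^sub>R (Vx, Vy, 0::'s, Vu)) = norm (Vx, Vy, 0::'s, Vu) / D1" unfolding norm_scaleR using D1p by simp
      also have "\<dots> \<le> (pa * a + pb * b + pc * c) / m"
        by (rule frac_le) (use nP S1 D1m m0 p0 abc in auto)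
      also have "\<dots> = (pa / m) * a + (pb / m) * b + (pc / m) * c" by (simp add: field_simps add_divide_distrib)
      finally show ?thesis .
    qed
    have "norm ((1 / D1) *\<^sub>R (Vx, Vy, 0::'s, Vu)) \<le> \<zeta> * (a + b + c)"
      unfolding \<zeta>_def by (rule lin_comb_bound[OF abc _ _ _ nrm]) (use p0 m0 in auto)
    hence "dist0 (lsubdiff (Gamma S A K g f h \<delta> \<gamma> m) (x1, y1, z1, u1)) \<le> ereal (\<zeta> * (a + b + c))"
      using dist_le by (meson ereal_less_eq(3) order_trans)
    thus ?thesis unfolding \<delta>_def x1_def y1_def z1_def u1_def a_def b_def c_def x0_def u0_def z0_def .
  qed
  show ?thesis using \<zeta>0 main by blast
qed

end
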